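(* Let $G$ be a compact Hausdorff group and $\hat G$ a complete set of pairwise non-isomorphic irreducible unitary representations of $G$. Fix data $y^{(1)},\ldots,y^{(n)}\in L^2(G)$ (real-valued), $q\ge1$, $\lambda\ge0$ and real constants $\mu_1,\ldots,\mu_q$. For any subset $\hat H\subseteq\hat G$, $\mathrm{OPT}\text{-}\hat H\le\mathrm{OPT}\text{-}\hat G$.
   Context: $\mu$ is normalized Haar measure; each $\xi\in\hat G$ is $\rho_\xi:G\to U(V_\xi)$, $d_\xi=\dim V_\xi<\infty$. Fourier coefficients $\hat f_\xi=\int_G f(g)\rho_\xi(g)^*d\mu(g)$. For $\hat H\subseteq\hat G$, $L^2(\hat H)$ = functions $f\in L^2(G)$ with $\hat f_\xi=0$ for $\xi\notin\hat H$; $B(L^2(\hat H))$ = block-diagonal operators $\ell=(\ell_\xi)_{\xi\in\hat H}$, $\ell_\xi\in\mathbb{C}^{d_\xi\times d_\xi}$, acting by $\hat f_\xi\mapsto\hat f_\xi\ell_\xi^*$. Atomic norm $\|z\|_{\hat G}=\inf\{s\ge0:z\in s\cdot\mathrm{cl}\,\mathrm{conv}\{\pm(\rho_\xi(g))_{\xi\in\hat G}:g\in G\}\}$; $P_{\hat H}(z)=(z_\xi)_{\xi\in\hat H}$; $\|t\|^+_{\hat H}=\inf\{\|z\|_{\hat G}:z\in B(L^2(\hat G)),P_{\hat H}(z)=t\}$. $\mathrm{OPT}\text{-}\hat H$ is the infimum, over $\hat\phi_1,\ldots,\hat\phi_q\in L^2(\hat H)$ and $\ell^{(i)}_j\in B(L^2(\hat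 H))$ ($1\le i\le n$, $1\le j\le q$), of $\sum_{i=1}^n\big(\sum_{\xi\in\hat H}\frac{d_\xi^2}{2}\|\hat y^{(i)}_\xi-\sum_{j=1}^q\hat\phi_{j,\xi}(\ell^{(i)}_{j,\xi})^*\|_F^2+\lambda\sum_{j=1}^q\|\ell^{(i)}_j\|^+_{\hat H}\big)+\sum_{j=1}^q\mu_j\sum_{\xi\in\hat H}d_\xi^2\|\hat\phi_{j,\xi}\|_F^2$. *)

theory Defs
  imports "HOL-Algebra.Group" "HOL-Probability.Probability" "Jordan_Normal_Form.Schur_Decomposition"
begin

definition compact_Hausdorff_group :: "'g monoid \<Rightarrow> 'g topology \<Rightarrow> bool" where
  "compact_Hausdorff_group G T \<longleftrightarrow>
     group G \<and> topspace T = carrier G \<and> compact_space T \<and> Hausdorff_space T \<and>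
     continuous_map (prod_topology T T) T (\<lambda>(x, y). x \<otimes>\<^bsub>G\<^esub> y) \<and>
     continuous_map T T (\<lambda>x. inv\<^bsub>G\<^esub> x)"

definition normalized_Haar :: "'g monoid \<Rightarrow> 'g topology \<Rightarrow> 'g measure \<Rightarrow> bool" where
  "normalized_Haar G T M \<longleftrightarrow>
     space M = carrier G \<and>
     sets M = sigma_sets (carrier G) {U. openin T U} \<and>
     prob_space M \<and>
     (\<forall>g\<in>carrier G. \<forall>A\<in>sets M.
        (\<lambda>x. g \<otimes>\<^bsub>G\<^esub> x) ` A \<in> sets M \<and>
        emeasure M ((\<lambda>x. g \<otimes>\<^bsub>G\<^esub> x) ` A) = emeasure M A) \<and>
     (\<forall>A\<in>sets M. emeasure M A = (INF U\<in>{U. openin T U \<and> A \<subseteq> U}. emeasure M U)) \<and>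
     (\<forall>U. openin T U \<longrightarrow> emeasure M U = (SUP K\<in>{K. compactin T K \<and> K \<subseteq> U}. emeasure M K))"

definition unitary_rep :: "'g monoid \<Rightarrow> 'g topology \<Rightarrow> nat \<Rightarrow> ('g \<Rightarrow> complex mat) \<Rightarrow> bool" where
  "unitary_rep G T d \<rho> \<longleftrightarrow>
     (\<forall>g\<in>carrier G. \<rho> g \<in> carrier_mat d d \<and> mat_adjoint (\<rho> g) * \<rho> g = 1\<^sub>m d) \<and>
     (\<forall>g\<in>carrier G. \<forall>h\<in>carrier G. \<rho> (g \<otimes>\<^bsub>G\<^esub> h) = \<rho> g * \<rho> h) \<and>
     (\<forall>a<d. \<forall>b<d. continuous_map T euclidean (\<lambda>g. \<rho> g $$ (a, b)))"

definition cvec_subspace :: "nat \<Rightarrow> complex vec set \<Rightarrow> bool" where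
  "cvec_subspace d W \<longleftrightarrow> W \<subseteq> carrier_vec d \<and> 0\<^sub>v d \<in> W \<and>
     (\<forall>v\<in>W. \<forall>w\<in>W. v + w \<in> W) \<and> (\<forall>c. \<forall>v\<in>W. c \<cdot>\<^sub>v v \<in> W)"

definition irreducible_rep :: "'g monoid \<Rightarrow> nat \<Rightarrow> ('g \<Rightarrow> complex mat) \<Rightarrow> bool" where
  "irreducible_rep G d \<rho> \<longleftrightarrow> d \<ge> 1 \<and>
     (\<forall>W. cvec_subspace d W \<and> (\<forall>g\<in>carrier G. \<forall>v\<in>W. \<rho> g *\<^sub>v v \<in> W)
          \<longrightarrow> W = {0\<^sub>v d} \<or> W = carrier_vec d)"

definition rep_iso :: "'g monoid \<Rightarrow> nat \<Rightarrow> ('g \<Rightarrow> complex mat) \<Rightarrow> nat \<Rightarrow> ('g \<Rightarrow> complex mat) \<Rightarrow> bool" where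
  "rep_iso G d \<rho> d' \<sigma> \<longleftrightarrow> d = d' \<and>
     (\<exists>A\<in>carrier_mat d d. invertible_mat A \<and> (\<forall>g\<in>carrier G. A * \<rho> g = \<sigma> g * A))"

definition complete_dual ::
  "'g monoid \<Rightarrow> 'g topology \<Rightarrow> 'x set \<Rightarrow> ('x \<Rightarrow> nat) \<Rightarrow> ('x \<Rightarrow> 'g \<Rightarrow> complex mat) \<Rightarrow> bool" where
  "complete_dual G T Ghat d \<rho> \<longleftrightarrow>
     (\<forall>\<xi>\<in>Ghat. unitary_rep G T (d \<xi>) (\<rho> \<xi>) \<and> irreducible_rep G (d \<xi>) (\<rho> \<xi>)) \<and>
     (\<forall>\<xi>\<in>Ghat. \<forall>\<xi>'\<in>Ghat. \<xi> \<noteq> \<xi>' \<longrightarrow> \<not> rep_iso G (d \<xi>) (\<rho> \<xi>) (d \<xi>') (\<rho> \<xi>')) \<and>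
     (\<forall>d' \<sigma>. unitary_rep G T d' \<sigma> \<and> irreducible_rep G d' \<sigma> \<longrightarrow>
        (\<exists>\<xi>\<in>Ghat. rep_iso G d' \<sigma> (d \<xi>) (\<rho> \<xi>)))"

definition L2 :: "'g measure \<Rightarrow> ('g \<Rightarrow> complex) \<Rightarrow> bool" where
  "L2 M f \<longleftrightarrow> f \<in> borel_measurable M \<and> integrable M (\<lambda>g. (cmod (f g))\<^sup>2)"

definition fourier :: "'g measure \<Rightarrow> ('x \<Rightarrow> nat) \<Rightarrow> ('x \<Rightarrow> 'g \<Rightarrow> complex mat)
    \<Rightarrow> ('g \<Rightarrow> complex) \<Rightarrow> 'x \<Rightarrow> complex mat" where
  "fourier M d \<rho> f \<xi> = mat (d \<xi>) (d \<xi>)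
     (\<lambda>(a, b). LINT g|M. f g * (mat_adjoint (\<rho> \<xi> g) $$ (a, b)))"

definition L2_hat :: "'g measure \<Rightarrow> 'x set \<Rightarrow> ('x \<Rightarrow> nat) \<Rightarrow> ('x \<Rightarrow> 'g \<Rightarrow> complex mat)
    \<Rightarrow> 'x set \<Rightarrow> ('g \<Rightarrow> complex) \<Rightarrow> bool" where
  "L2_hat M Ghat d \<rho> H f \<longleftrightarrow> L2 M f \<and>
     (\<forall>\<xi>\<in>Ghat - H. fourier M d \<rho> f \<xi> = 0\<^sub>m (d \<xi>) (d \<xi>))"

definition cvnorm :: "complex vec \<Rightarrow> real" where
  "cvnorm v = sqrt (\<Sum>i<dim_vec v. (cmod (v $ i))\<^sup>2)"

definition opnorm_le :: "complex mat \<Rightarrow> real \<Rightarrow> bool" where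
  "opnorm_le A c \<longleftrightarrow> (\<forall>v\<in>carrier_vec (dim_col A). cvnorm (A *\<^sub>v v) \<le> c * cvnorm v)"

text \<open>\<open>\<ell> \<in> B(L^2(\<hat>H))\<close>: a bounded block-diagonal family indexed by \<open>H\<close>
  (values outside \<open>H\<close> are irrelevant).\<close>
definition block_op :: "('x \<Rightarrow> nat) \<Rightarrow> 'x set \<Rightarrow> ('x \<Rightarrow> complex mat) \<Rightarrow> bool" where
  "block_op d H l \<longleftrightarrow> (\<forall>\<xi>\<in>H. l \<xi> \<in> carrier_mat (d \<xi>) (d \<xi>)) \<and>
     (\<exists>C. \<forall>\<xi>\<in>H. opnorm_le (l \<xi>) C)"

definition conv_atoms :: "'g monoid \<Rightarrow> 'x set \<Rightarrow> ('x \<Rightarrow> nat) \<Rightarrow> ('x \<Rightarrow> 'g \<Rightarrow> complex mat)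
    \<Rightarrow> ('x \<Rightarrow> complex mat) set" where
  "conv_atoms G Ghat d \<rho> = {w. \<exists>k (c::nat \<Rightarrow> real) (s::nat \<Rightarrow> real) gs.
      (\<forall>i<k. c i \<ge> 0 \<and> s i \<in> {-1, 1} \<and> gs i \<in> carrier G) \<and> (\<Sum>i<k. c i) = 1 \<and>
      (\<forall>\<xi>\<in>Ghat. w \<xi> = mat (d \<xi>) (d \<xi>)
          (\<lambda>(a, b). \<Sum>i<k. complex_of_real (c i * s i) * (\<rho> \<xi> (gs i) $$ (a, b))))}"

definition cl_conv_atoms :: "'g monoid \<Rightarrow> 'x set \<Rightarrow> ('x \<Rightarrow> nat) \<Rightarrow> ('x \<Rightarrow> 'g \<Rightarrow> complex mat)
    \<Rightarrow> ('x \<Rightarrow> complex mat) set" where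
  "cl_conv_atoms G Ghat d \<rho> = {z. block_op d Ghat z \<and>
      (\<forall>\<epsilon>>0. \<exists>w\<in>conv_atoms G Ghat d \<rho>. \<forall>\<xi>\<in>Ghat. opnorm_le (z \<xi> - w \<xi>) \<epsilon>)}"

text \<open>\<open>\<parallel>z\<parallel>_{\<hat>G}\<close> (value \<open>\<infinity>\<close> if no such \<open>s\<close> exists)\<close>
definition atomic_norm :: "'g monoid \<Rightarrow> 'x set \<Rightarrow> ('x \<Rightarrow> nat) \<Rightarrow> ('x \<Rightarrow> 'g \<Rightarrow> complex mat)
    \<Rightarrow> ('x \<Rightarrow> complex mat) \<Rightarrow> ennreal" where
  "atomic_norm G Ghat d \<rho> z = (INF s\<in>{s::real. s \<ge> 0 \<and>
      (\<exists>w\<in>cl_conv_atoms G Ghat d \<rho>. \<forall>\<xi>\<in>Ghat. z \<xi> = complex_of_real s \<cdot>\<^sub>m w \<xi>)}. ennreal s)"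

definition plus_norm :: "'g monoid \<Rightarrow> 'x set \<Rightarrow> ('x \<Rightarrow> nat) \<Rightarrow> ('x \<Rightarrow> 'g \<Rightarrow> complex mat)
    \<Rightarrow> 'x set \<Rightarrow> ('x \<Rightarrow> complex mat) \<Rightarrow> ennreal" where
  "plus_norm G Ghat d \<rho> H t = (INF z\<in>{z. block_op d Ghat z \<and> (\<forall>\<xi>\<in>H. z \<xi> = t \<xi>)}.
      atomic_norm G Ghat d \<rho> z)"

definition frob2 :: "complex mat \<Rightarrow> real" where
  "frob2 A = (\<Sum>a<dim_row A. \<Sum>b<dim_col A. (cmod (A $$ (a, b)))\<^sup>2)"

definition residual :: "'g measure \<Rightarrow> ('x \<Rightarrow> nat) \<Rightarrow> ('x \<Rightarrow> 'g \<Rightarrow> complex mat)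
    \<Rightarrow> nat \<Rightarrow> ('g \<Rightarrow> real) \<Rightarrow> (nat \<Rightarrow> 'g \<Rightarrow> complex) \<Rightarrow> (nat \<Rightarrow> 'x \<Rightarrow> complex mat)
    \<Rightarrow> 'x \<Rightarrow> complex mat" where
  "residual M d \<rho> q yi \<phi> li \<xi> = mat (d \<xi>) (d \<xi>) (\<lambda>(a, b).
      fourier M d \<rho> (\<lambda>g. complex_of_real (yi g)) \<xi> $$ (a, b)
      - (\<Sum>j<q. (fourier M d \<rho> (\<phi> j) \<xi> * mat_adjoint (li j \<xi>)) $$ (a, b)))"

text \<open>Objective; sums over \<open>\<hat>H\<close> (possibly uncountable) of nonnegative terms are taken
  as sums over the counting measure. Indices: \<open>i < n\<close>, \<open>j < q\<close>.\<close>
definition objective :: "'g monoid \<Rightarrow> 'g measure \<Rightarrow> 'x set \<Rightarrow> ('x \<Rightarrow> nat)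
    \<Rightarrow> ('x \<Rightarrow> 'g \<Rightarrow> complex mat) \<Rightarrow> 'x set \<Rightarrow> nat \<Rightarrow> nat \<Rightarrow> (nat \<Rightarrow> 'g \<Rightarrow> real)
    \<Rightarrow> real \<Rightarrow> (nat \<Rightarrow> real) \<Rightarrow> (nat \<Rightarrow> 'g \<Rightarrow> complex) \<Rightarrow> (nat \<Rightarrow> nat \<Rightarrow> 'x \<Rightarrow> complex mat)
    \<Rightarrow> ennreal" where
  "objective G M Ghat d \<rho> H n q y lam mu \<phi> l =
     (\<Sum>i<n. (\<integral>\<^sup>+ \<xi>. ennreal ((real (d \<xi>))\<^sup>2 / 2 * frob2 (residual M d \<rho> q (y i) \<phi> (l i) \<xi>))
                 \<partial>count_space H)
            + ennreal lam * (\<Sum>j<q. plus_norm G Ghat d \<rho> H (l i j)))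
     + (\<Sum>j<q. ennreal (mu j) *
          (\<integral>\<^sup>+ \<xi>. ennreal ((real (d \<xi>))\<^sup>2 * frob2 (fourier M d \<rho> (\<phi> j) \<xi>)) \<partial>count_space H))"

definition OPT :: "'g monoid \<Rightarrow> 'g measure \<Rightarrow> 'x set \<Rightarrow> ('x \<Rightarrow> nat)
    \<Rightarrow> ('x \<Rightarrow> 'g \<Rightarrow> complex mat) \<Rightarrow> 'x set \<Rightarrow> nat \<Rightarrow> nat \<Rightarrow> (nat \<Rightarrow> 'g \<Rightarrow> real)
    \<Rightarrow> real \<Rightarrow> (nat \<Rightarrow> real) \<Rightarrow> ennreal" where
  "OPT G M Ghat d \<rho> H n q y lam mu =
     (INF (\<phi>, l)\<in>{(\<phi>, l). (\<forall>j<q. L2_hat M Ghat d \<rho> H (\<phi> j)) \<and>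
                         (\<forall>i<n. \<forall>j<q. block_op d H (l i j))}.
        objective G M Ghat d \<rho> H n q y lam mu \<phi> l)"

end

theory Submission
  imports Defs "HOL-Computational_Algebra.Fundamental_Theorem_Algebra"
begin


locale hset = G: group G for G :: "'g monoid" +
  fixes T :: "'g topology" and M :: "'g measure"
    and Ghat :: "'x set" and d :: "'x \<Rightarrow> nat" and \<rho> :: "'x \<Rightarrow> 'g \<Rightarrow> complex mat"
  assumes haar: "normalized_Haar G T M" and dual: "complete_dual G T Ghat d \<rho>"
    and top: "topspace T = carrier G"
begin

lemma space_M: "space M = carrier G" using haar unfolding normalized_Haar_def by auto
lemma sets_M: "sets M = sigma_sets (carrier G) {U. openin T U}" using haar unfolding normalized_Haar_def by auto
lemma prob: "prob_space M" using haar unfolding normalized_Haar_def by auto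

lemma meas_cont:
  fixes f :: "'g \<Rightarrow> 'b::topological_space"
  assumes "continuous_map T euclidean f"
  shows "f \<in> borel_measurable M"
proof (rule borel_measurableI)
  fix S :: "'b set" assume "open S"
  then have "openin T {x \<in> topspace T. f x \<in> S}"
    using assms by (metis continuous_map open_openin)
  moreover have "f -` S \<inter> space M = {x \<in> topspace T. f x \<in> S}"
    using top space_M by auto
  ultimately show "f -` S \<inter> space M \<in> sets M"
    unfolding sets_M by (auto intro: sigma_sets.Basic)
qed

lemma transl_meas:
  assumes h: "h \<in> carrier G"
  shows "(\<lambda>x. h \<otimes>\<^bsub>G\<^esub> x) \<in> measurable M M"
    and "\<And>A. A \<in> sets M \<Longrightarrow> (\<lambda>x. h \<otimes>\<^bsub>G\<^esub> x) -` A \<inter> space M = (\<lambda>x. inv\<^bsub>G\<^esub> h \<otimes>\<^bsub>G\<^esub> x) ` A"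
proof -
  have pre: "(\<lambda>x. h \<otimes>\<^bsub>G\<^esub> x) -` A \<inter> space M = (\<lambda>x. inv\<^bsub>G\<^esub> h \<otimes>\<^bsub>G\<^esub> x) ` A"
    if A: "A \<in> sets M" for A
  proof -
    have Asub: "A \<subseteq> carrier G" using sets.sets_into_space[OF A] space_M by auto
    show ?thesis
    proof (intro equalityI subsetI)
      fix x assume x: "x \<in> (\<lambda>x. h \<otimes>\<^bsub>G\<^esub> x) -` A \<inter> space M"
      then have xc: "x \<in> carrier G" and hx: "h \<otimes>\<^bsub>G\<^esub> x \<in> A" using space_M by auto
      have "x = inv\<^bsub>G\<^esub> h \<otimes>\<^bsub>G\<^esub> (h \<otimes>\<^bsub>G\<^esub> x)"
        using h xc by (simp add: G.inv_solve_left)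
      then show "x \<in> (\<lambda>x. inv\<^bsub>G\<^esub> h \<otimes>\<^bsub>G\<^esub> x) ` A" using hx by blast
    next
      fix x assume "x \<in> (\<lambda>x. inv\<^bsub>G\<^esub> h \<otimes>\<^bsub>G\<^esub> x) ` A"
      then obtain y where y: "y \<in> A" and xy: "x = inv\<^bsub>G\<^esub> h \<otimes>\<^bsub>G\<^esub> y" by blast
      have yc: "y \<in> carrier G" using y Asub by auto
      have xc: "x \<in> carrier G" using xy yc h by simp
      have "h \<otimes>\<^bsub>G\<^esub> x = y" using xy h yc
        by (metis G.inv_solve_left G.inv_closed G.m_closed)
      then show "x \<in> (\<lambda>x. h \<otimes>\<^bsub>G\<^esub> x) -` A \<inter> space M" using y xc space_M by auto
    qed
  qed
  then show "\<And>A. A \<in> sets M \<Longrightarrow> (\<lambda>x. h \<otimes>\<^bsub>G\<^esub> x) -` A \<inter> space M = (\<lambda>x. inv\<^bsub>G\<^esub> h \<otimes>\<^bsub>G\<^esub> x) ` A" .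
  have ih: "inv\<^bsub>G\<^esub> h \<in> carrier G" using h by simp
  show "(\<lambda>x. h \<otimes>\<^bsub>G\<^esub> x) \<in> measurable M M"
  proof (rule measurableI)
    fix x assume "x \<in> space M" then show "h \<otimes>\<^bsub>G\<^esub> x \<in> space M"
      using h space_M by simp
  next
    fix A assume A: "A \<in> sets M"
    show "(\<lambda>x. h \<otimes>\<^bsub>G\<^esub> x) -` A \<inter> space M \<in> sets M"
      using pre[OF A] haar ih A unfolding normalized_Haar_def by auto
  qed
qed

lemma distr_transl:
  assumes h: "h \<in> carrier G"
  shows "distr M M (\<lambda>x. h \<otimes>\<^bsub>G\<^esub> x) = M"
proof (rule measure_eqI)
  show "sets (distr M M (\<lambda>x. h \<otimes>\<^bsub>G\<^esub> x)) = sets M" by simp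
  fix A assume A: "A \<in> sets (distr M M (\<lambda>x. h \<otimes>\<^bsub>G\<^esub> x))"
  then have A': "A \<in> sets M" by simp
  have ih: "inv\<^bsub>G\<^esub> h \<in> carrier G" using h by simp
  have "emeasure (distr M M (\<lambda>x. h \<otimes>\<^bsub>G\<^esub> x)) A = emeasure M ((\<lambda>x. h \<otimes>\<^bsub>G\<^esub> x) -` A \<inter> space M)"
    using transl_meas(1)[OF h] A' by (simp add: emeasure_distr)
  also have "\<dots> = emeasure M ((\<lambda>x. inv\<^bsub>G\<^esub> h \<otimes>\<^bsub>G\<^esub> x) ` A)" using transl_meas(2)[OF h A'] by simp
  also have "\<dots> = emeasure M A" using haar ih A' unfolding normalized_Haar_def by auto
  finally show "emeasure (distr M M (\<lambda>x. h \<otimes>\<^bsub>G\<^esub> x)) A = emeasure M A" .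
qed

lemma integral_transl:
  fixes f :: "'g \<Rightarrow> 'b::{banach, second_countable_topology}"
  assumes h: "h \<in> carrier G" and f: "f \<in> borel_measurable M"
  shows "(\<integral>x. f (h \<otimes>\<^bsub>G\<^esub> x) \<partial>M) = (\<integral>x. f x \<partial>M)"
proof -
  have "(\<integral>x. f (h \<otimes>\<^bsub>G\<^esub> x) \<partial>M) = integral\<^sup>L (distr M M (\<lambda>x. h \<otimes>\<^bsub>G\<^esub> x)) f"
    using integral_distr[OF transl_meas(1)[OF h] f] by simp
  then show ?thesis using distr_transl[OF h] by simp
qed

end


lemma adj_carrier: "A \<in> carrier_mat n m \<Longrightarrow> mat_adjoint A \<in> carrier_mat m n"
  unfolding mat_adjoint_def by auto

lemma adj_index: "A \<in> carrier_mat n m \<Longrightarrow> i < m \<Longrightarrow> j < n \<Longrightarrow>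
   mat_adjoint (A :: complex mat) $$ (i,j) = cnj (A $$ (j,i))"
  unfolding mat_adjoint_def by (auto simp: mat_of_rows_index)

lemma mult_index_sum: "A \<in> carrier_mat n k \<Longrightarrow> B \<in> carrier_mat k m \<Longrightarrow> i < n \<Longrightarrow> j < m \<Longrightarrow>
   (A * B) $$ (i,j) = (\<Sum>p<k. A $$ (i,p) * B $$ (p,j))"
  by (auto simp: scalar_prod_def intro!: sum.cong)

lemma unit_vec_col: "(A :: complex mat) \<in> carrier_mat n m \<Longrightarrow> i < n \<Longrightarrow> j < m \<Longrightarrow> (A *\<^sub>v unit_vec m j) $ i = A $$ (i,j)"
proof -
  assume a: "A \<in> carrier_mat n m" "i < n" "j < m"
  have "(A *\<^sub>v unit_vec m j) $ i = (\<Sum>ia = 0..<m. A $$ (i, ia) * (if ia = j then 1 else 0))"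
    using a by (simp add: scalar_prod_def unit_vec_def)
  also have "\<dots> = (\<Sum>ia = 0..<m. if ia = j then A $$ (i, ia) else 0)" by (rule sum.cong) auto
  also have "\<dots> = A $$ (i,j)" using a by simp
  finally show ?thesis .
qed

lemma schur_scalar:
  fixes G :: "'g monoid"
  assumes irr: "irreducible_rep G n \<sigma>" and sc: "\<forall>g\<in>carrier G. \<sigma> g \<in> carrier_mat n n"
    and Y: "Y \<in> carrier_mat n n" and comm: "\<forall>g\<in>carrier G. \<sigma> g * Y = Y * \<sigma> g"
  shows "\<exists>c. Y = c \<cdot>\<^sub>m 1\<^sub>m n"
proof -
  have n1: "n \<ge> 1" using irr unfolding irreducible_rep_def by auto
  have "degree (char_poly Y) = n" using degree_monic_char_poly[OF Y] by auto
  then have "\<not> constant (poly (char_poly Y))" using n1 by (simp add: constant_degree)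
  then obtain c where "poly (char_poly Y) c = 0" using fundamental_theorem_of_algebra by blast
  then have "eigenvalue Y c" using eigenvalue_root_char_poly[OF Y] by simp
  then obtain v where ev: "eigenvector Y v c" unfolding eigenvalue_def by auto
  have v: "v \<in> carrier_vec n" "v \<noteq> 0\<^sub>v n" "Y *\<^sub>v v = c \<cdot>\<^sub>v v" using ev Y unfolding eigenvector_def by auto
  define W where "W = {w \<in> carrier_vec n. Y *\<^sub>v w = c \<cdot>\<^sub>v w}"
  have sub: "cvec_subspace n W"
    unfolding cvec_subspace_def W_def
  proof (intro conjI ballI allI)
    show "0\<^sub>v n \<in> {w \<in> carrier_vec n. Y *\<^sub>v w = c \<cdot>\<^sub>v w}" using Y by auto
  next
    fix v w assume "v \<in> {w \<in> carrier_vec n. Y *\<^sub>v w = c \<cdot>\<^sub>v w}" "w \<in> {w \<in> carrier_vec n. Y *\<^sub>v w = c \<cdot>\<^sub>v w}"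
    then show "v + w \<in> {w \<in> carrier_vec n. Y *\<^sub>v w = c \<cdot>\<^sub>v w}"
      using Y by (auto simp: mult_add_distrib_mat_vec smult_add_distrib_vec)
  next
    fix k v assume "v \<in> {w \<in> carrier_vec n. Y *\<^sub>v w = c \<cdot>\<^sub>v w}"
    then show "k \<cdot>\<^sub>v v \<in> {w \<in> carrier_vec n. Y *\<^sub>v w = c \<cdot>\<^sub>v w}"
      using Y by (auto simp: mult_mat_vec smult_smult_assoc mult.commute)
  qed auto
  have inv: "\<forall>g\<in>carrier G. \<forall>w\<in>W. \<sigma> g *\<^sub>v w \<in> W"
  proof (intro ballI)
    fix g w assume g: "g \<in> carrier G" and w: "w \<in> W"
    have sg: "\<sigma> g \<in> carrier_mat n n" using sc g by auto
    have wc: "w \<in> carrier_vec n" and yw: "Y *\<^sub>v w = c \<cdot>\<^sub>v w" using w W_def by auto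
    have "Y *\<^sub>v (\<sigma> g *\<^sub>v w) = (Y * \<sigma> g) *\<^sub>v w" using Y sg wc by simp
    also have "\<dots> = (\<sigma> g * Y) *\<^sub>v w" using comm g by simp
    also have "\<dots> = \<sigma> g *\<^sub>v (c \<cdot>\<^sub>v w)" using Y sg wc yw by simp
    also have "\<dots> = c \<cdot>\<^sub>v (\<sigma> g *\<^sub>v w)" using sg wc by (simp add: mult_mat_vec)
    finally show "\<sigma> g *\<^sub>v w \<in> W" using sg wc unfolding W_def by auto
  qed
  have "W = {0\<^sub>v n} \<or> W = carrier_vec n" using irr sub inv unfolding irreducible_rep_def by blast
  moreover have "v \<in> W" using v W_def by auto
  ultimately have Wall: "W = carrier_vec n" using v by auto
  have "Y = c \<cdot>\<^sub>m 1\<^sub>m n"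
  proof (rule eq_matI)
    fix i j assume i: "i < dim_row (c \<cdot>\<^sub>m 1\<^sub>m n)" and j: "j < dim_col (c \<cdot>\<^sub>m 1\<^sub>m n)"
    then have i': "i < n" and j': "j < n" by auto
    have "unit_vec n j \<in> W" using Wall j' by auto
    then have "Y *\<^sub>v unit_vec n j = c \<cdot>\<^sub>v unit_vec n j" unfolding W_def by auto
    then have "(Y *\<^sub>v unit_vec n j) $ i = c * (if i = j then 1 else 0)" using i' j' by (simp add: unit_vec_def)
    then show "Y $$ (i, j) = (c \<cdot>\<^sub>m 1\<^sub>m n) $$ (i, j)" using unit_vec_col[OF Y i' j'] i' j' by simp
  qed (use Y in auto)
  then show ?thesis by blast
qed



lemma mult_cnj_sq: "z * cnj z = (complex_of_real (cmod z))\<^sup>2"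
  by (metis complex_norm_square of_real_power)
lemma cnj_mult_sq: "cnj z * z = (complex_of_real (cmod z))\<^sup>2"
  by (metis complex_norm_square of_real_power mult.commute)

lemma borel_measurable_cnj[measurable (raw)]:
  "f \<in> borel_measurable M \<Longrightarrow> (\<lambda>x. cnj (f x :: complex)) \<in> borel_measurable M"
  by (intro borel_measurable_continuous_on[where f=cnj] continuous_intros) auto

lemma adj_adj: "A \<in> carrier_mat n m \<Longrightarrow> mat_adjoint (mat_adjoint (A :: complex mat)) = A"
proof -
  assume A: "A \<in> carrier_mat n m"
  have aA: "mat_adjoint A \<in> carrier_mat m n" using adj_carrier[OF A] .
  show ?thesis by (rule eq_matI) (use A aA adj_carrier[OF aA] in \<open>auto simp: adj_index[OF aA] adj_index[OF A]\<close>)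
qed

lemma adj_mult: "A \<in> carrier_mat n k \<Longrightarrow> B \<in> carrier_mat k m \<Longrightarrow>
   mat_adjoint ((A :: complex mat) * B) = mat_adjoint B * mat_adjoint A"
proof (rule eq_matI)
  assume A: "A \<in> carrier_mat n k" and B: "B \<in> carrier_mat k m"
  have AB: "A * B \<in> carrier_mat n m" using A B by auto
  have aA: "mat_adjoint A \<in> carrier_mat k n" and aB: "mat_adjoint B \<in> carrier_mat m k"
    using A B by (auto intro: adj_carrier)
  show "dim_row (mat_adjoint (A * B)) = dim_row (mat_adjoint B * mat_adjoint A)"
    "dim_col (mat_adjoint (A * B)) = dim_col (mat_adjoint B * mat_adjoint A)"
    using adj_carrier[OF AB] aA aB by auto
  fix i j assume "i < dim_row (mat_adjoint B * mat_adjoint A)" "j < dim_col (mat_adjoint B * mat_adjoint A)"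
  then have i: "i < m" and j: "j < n" using aA aB by auto
  have "mat_adjoint (A * B) $$ (i, j) = cnj ((A * B) $$ (j, i))" using adj_index[OF AB i j] .
  also have "\<dots> = cnj (\<Sum>p<k. A $$ (j,p) * B $$ (p,i))" using mult_index_sum[OF A B j i] by simp
  also have "\<dots> = (\<Sum>p<k. mat_adjoint B $$ (i,p) * mat_adjoint A $$ (p,j))"
    using A B i j by (auto simp: adj_index mult.commute intro!: sum.cong)
  also have "\<dots> = (mat_adjoint B * mat_adjoint A) $$ (i,j)" using mult_index_sum[OF aB aA i j] by simp
  finally show "mat_adjoint (A * B) $$ (i, j) = (mat_adjoint B * mat_adjoint A) $$ (i, j)" .
qed

lemma adj_diag: "X \<in> carrier_mat n m \<Longrightarrow> e < m \<Longrightarrow>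
   (mat_adjoint X * X) $$ (e,e) = (\<Sum>a<n. complex_of_real ((cmod (X $$ (a,e)))\<^sup>2))"
  by (subst mult_index_sum[of _ m n _ m]) (auto simp: adj_index adj_carrier cnj_mult_sq intro!: sum.cong)

lemma adj_diag': "X \<in> carrier_mat n m \<Longrightarrow> a < n \<Longrightarrow>
   (X * mat_adjoint X) $$ (a,a) = (\<Sum>e<m. complex_of_real ((cmod (X $$ (a,e)))\<^sup>2))"
  by (subst mult_index_sum[of _ n m _ n]) (auto simp: adj_index adj_carrier mult_cnj_sq intro!: sum.cong)

context hset begin

lemma rep_facts: "\<xi> \<in> Ghat \<Longrightarrow> unitary_rep G T (d \<xi>) (\<rho> \<xi>) \<and> irreducible_rep G (d \<xi>) (\<rho> \<xi>)"
  using dual unfolding complete_dual_def by auto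

lemma rho_car: "\<xi> \<in> Ghat \<Longrightarrow> g \<in> carrier G \<Longrightarrow> \<rho> \<xi> g \<in> carrier_mat (d \<xi>) (d \<xi>)"
  using rep_facts unfolding unitary_rep_def by auto

lemma rho_unit: "\<xi> \<in> Ghat \<Longrightarrow> g \<in> carrier G \<Longrightarrow> mat_adjoint (\<rho> \<xi> g) * \<rho> \<xi> g = 1\<^sub>m (d \<xi>)"
  using rep_facts unfolding unitary_rep_def by auto

lemma rho_mult: "\<xi> \<in> Ghat \<Longrightarrow> g \<in> carrier G \<Longrightarrow> h \<in> carrier G \<Longrightarrow> \<rho> \<xi> (g \<otimes>\<^bsub>G\<^esub> h) = \<rho> \<xi> g * \<rho> \<xi> h"
  using rep_facts unfolding unitary_rep_def by auto

lemma rho_meas: "\<xi> \<in> Ghat \<Longrightarrow> a < d \<xi> \<Longrightarrow> b < d \<xi> \<Longrightarrow> (\<lambda>g. \<rho> \<xi> g $$ (a,b)) \<in> borel_measurable M"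
  using rep_facts unfolding unitary_rep_def by (auto intro!: meas_cont)

lemma rho_irr: "\<xi> \<in> Ghat \<Longrightarrow> irreducible_rep G (d \<xi>) (\<rho> \<xi>)"
  using rep_facts by auto

lemma col_orth:
  assumes "\<xi> \<in> Ghat" "g \<in> carrier G" "e < d \<xi>" "b < d \<xi>"
  shows "(\<Sum>a<d \<xi>. cnj (\<rho> \<xi> g $$ (a,e)) * \<rho> \<xi> g $$ (a,b)) = (if e = b then 1 else 0)"
proof -
  have R: "\<rho> \<xi> g \<in> carrier_mat (d \<xi>) (d \<xi>)" using rho_car assms by auto
  have "(mat_adjoint (\<rho> \<xi> g) * \<rho> \<xi> g) $$ (e,b) = (\<Sum>a<d \<xi>. cnj (\<rho> \<xi> g $$ (a,e)) * \<rho> \<xi> g $$ (a,b))"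
    using assms R by (subst mult_index_sum[OF adj_carrier[OF R] R]) (auto simp: adj_index)
  then show ?thesis using rho_unit[OF assms(1,2)] assms by simp
qed

lemma rho_bound:
  assumes "\<xi> \<in> Ghat" "g \<in> carrier G" "a < d \<xi>" "b < d \<xi>"
  shows "cmod (\<rho> \<xi> g $$ (a,b)) \<le> 1"
proof -
  have "complex_of_real (\<Sum>a<d \<xi>. (cmod (\<rho> \<xi> g $$ (a,b)))\<^sup>2) = (\<Sum>a<d \<xi>. cnj (\<rho> \<xi> g $$ (a,b)) * \<rho> \<xi> g $$ (a,b))"
    by (auto simp: cnj_mult_sq)
  also have "\<dots> = 1" using col_orth[OF assms(1,2,4,4)] by simp
  finally have s: "(\<Sum>a<d \<xi>. (cmod (\<rho> \<xi> g $$ (a,b)))\<^sup>2) = 1" by (rule of_real_eq_1_iff[THEN iffD1])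
  have "(cmod (\<rho> \<xi> g $$ (a,b)))\<^sup>2 \<le> (\<Sum>a<d \<xi>. (cmod (\<rho> \<xi> g $$ (a,b)))\<^sup>2)"
    using assms(3) by (intro member_le_sum) auto
  then have "(cmod (\<rho> \<xi> g $$ (a,b)))\<^sup>2 \<le> 1" using s by simp
  then show ?thesis by (simp add: power_le_one_iff abs_le_square_iff[symmetric])
qed

lemma coef_integrable:
  assumes "\<xi> \<in> Ghat" "\<xi>' \<in> Ghat" "a < d \<xi>" "b < d \<xi>" "c < d \<xi>'" "e < d \<xi>'"
  shows "integrable M (\<lambda>g. \<rho> \<xi> g $$ (a,b) * cnj (\<rho> \<xi>' g $$ (c,e)))"
proof -
  interpret prob_space M by (rule prob)
  show ?thesis
  proof (rule integrable_const_bound[where B=1])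
    show "AE x in M. norm (\<rho> \<xi> x $$ (a,b) * cnj (\<rho> \<xi>' x $$ (c,e))) \<le> 1"
    proof (rule AE_I2)
      fix x assume "x \<in> space M"
      then have x: "x \<in> carrier G" using space_M by auto
      have "cmod (\<rho> \<xi> x $$ (a,b)) * cmod (\<rho> \<xi>' x $$ (c,e)) \<le> 1 * 1"
        using rho_bound[OF assms(1) x assms(3,4)] rho_bound[OF assms(2) x assms(5,6)]
        by (intro mult_mono) auto
      then show "norm (\<rho> \<xi> x $$ (a,b) * cnj (\<rho> \<xi>' x $$ (c,e))) \<le> 1" by (simp add: norm_mult)
    qed
    show "(\<lambda>g. \<rho> \<xi> g $$ (a,b) * cnj (\<rho> \<xi>' g $$ (c,e))) \<in> borel_measurable M"
      using rho_meas[OF assms(1,3,4)] rho_meas[OF assms(2,5,6)] by measurable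
  qed
qed

end


context hset begin

definition oint where "oint \<xi> a b \<xi>' c e = (\<integral>g. \<rho> \<xi> g $$ (a,b) * cnj (\<rho> \<xi>' g $$ (c,e)) \<partial>M)"

lemma X_inv:
  assumes x: "\<xi> \<in> Ghat" "\<xi>' \<in> Ghat" and b: "b < d \<xi>" and e: "e < d \<xi>'" and h: "h \<in> carrier G"
  defines "X \<equiv> mat (d \<xi>) (d \<xi>') (\<lambda>(a,c). oint \<xi> a b \<xi>' c e)"
  shows "\<rho> \<xi> h * X * mat_adjoint (\<rho> \<xi>' h) = X"
proof (rule eq_matI)
  have Rh: "\<rho> \<xi> h \<in> carrier_mat (d \<xi>) (d \<xi>)" and Rh': "\<rho> \<xi>' h \<in> carrier_mat (d \<xi>') (d \<xi>')"
    using rho_car x h by auto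
  have Xc: "X \<in> carrier_mat (d \<xi>) (d \<xi>')" unfolding X_def by auto
  have aRh': "mat_adjoint (\<rho> \<xi>' h) \<in> carrier_mat (d \<xi>') (d \<xi>')" using adj_carrier[OF Rh'] .
  show "dim_row (\<rho> \<xi> h * X * mat_adjoint (\<rho> \<xi>' h)) = dim_row X"
       "dim_col (\<rho> \<xi> h * X * mat_adjoint (\<rho> \<xi>' h)) = dim_col X" using Rh Xc aRh' by auto
  fix a c assume "a < dim_row X" "c < dim_col X"
  then have a: "a < d \<xi>" and c: "c < d \<xi>'" using Xc by auto
  have "(\<rho> \<xi> h * X * mat_adjoint (\<rho> \<xi>' h)) $$ (a,c)
      = (\<Sum>r<d \<xi>'. (\<rho> \<xi> h * X) $$ (a,r) * mat_adjoint (\<rho> \<xi>' h) $$ (r,c))"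
    using Rh Xc aRh' a c by (intro mult_index_sum) auto
  also have "\<dots> = (\<Sum>r<d \<xi>'. (\<Sum>p<d \<xi>. \<rho> \<xi> h $$ (a,p) * X $$ (p,r)) * cnj (\<rho> \<xi>' h $$ (c,r)))"
    using Rh Xc a c by (intro sum.cong refl) (simp add: mult_index_sum[OF Rh Xc] adj_index[OF Rh'] del: index_mult_mat)
  also have "\<dots> = (\<Sum>r<d \<xi>'. \<Sum>p<d \<xi>. (\<rho> \<xi> h $$ (a,p) * cnj (\<rho> \<xi>' h $$ (c,r))) * oint \<xi> p b \<xi>' r e)"
    unfolding X_def by (intro sum.cong refl) (auto simp: sum_distrib_left sum_distrib_right mult.commute mult.left_commute)
  also have "\<dots> = (\<integral>g. (\<Sum>r<d \<xi>'. \<Sum>p<d \<xi>. (\<rho> \<xi> h $$ (a,p) * cnj (\<rho> \<xi>' h $$ (c,r))) *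
        (\<rho> \<xi> g $$ (p,b) * cnj (\<rho> \<xi>' g $$ (r,e)))) \<partial>M)"
  proof -
    have int: "integrable M (\<lambda>g. \<rho> \<xi> h $$ (a,p) * cnj (\<rho> \<xi>' h $$ (c,r)) *
        (\<rho> \<xi> g $$ (p,b) * cnj (\<rho> \<xi>' g $$ (r,e))))" if "p < d \<xi>" "r < d \<xi>'" for p r
      by (intro integrable_mult_right coef_integrable) (use x b e that in auto)
    have "(\<integral>g. (\<Sum>r<d \<xi>'. \<Sum>p<d \<xi>. (\<rho> \<xi> h $$ (a,p) * cnj (\<rho> \<xi>' h $$ (c,r))) *
        (\<rho> \<xi> g $$ (p,b) * cnj (\<rho> \<xi>' g $$ (r,e)))) \<partial>M)
      = (\<Sum>r<d \<xi>'. \<integral>g. (\<Sum>p<d \<xi>. (\<rho> \<xi> h $$ (a,p) * cnj (\<rho> \<xi>' h $$ (c,r))) *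
        (\<rho> \<xi> g $$ (p,b) * cnj (\<rho> \<xi>' g $$ (r,e)))) \<partial>M)"
      by (rule Bochner_Integration.integral_sum) (auto intro!: integrable_sum int)
    also have "\<dots> = (\<Sum>r<d \<xi>'. \<Sum>p<d \<xi>. \<integral>g. (\<rho> \<xi> h $$ (a,p) * cnj (\<rho> \<xi>' h $$ (c,r))) *
        (\<rho> \<xi> g $$ (p,b) * cnj (\<rho> \<xi>' g $$ (r,e))) \<partial>M)"
      by (intro sum.cong refl Bochner_Integration.integral_sum) (auto intro!: int)
    finally show ?thesis unfolding oint_def by simp
  qed
  also have "\<dots> = (\<integral>g. \<rho> \<xi> (h \<otimes>\<^bsub>G\<^esub> g) $$ (a,b) * cnj (\<rho> \<xi>' (h \<otimes>\<^bsub>G\<^esub> g) $$ (c,e)) \<partial>M)"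
  proof (rule Bochner_Integration.integral_cong[OF refl])
    fix g assume "g \<in> space M"
    then have g: "g \<in> carrier G" using space_M by auto
    have Rg: "\<rho> \<xi> g \<in> carrier_mat (d \<xi>) (d \<xi>)" and Rg': "\<rho> \<xi>' g \<in> carrier_mat (d \<xi>') (d \<xi>')"
      using rho_car x g by auto
    have 1: "\<rho> \<xi> (h \<otimes>\<^bsub>G\<^esub> g) $$ (a,b) = (\<Sum>p<d \<xi>. \<rho> \<xi> h $$ (a,p) * \<rho> \<xi> g $$ (p,b))"
      using rho_mult[OF x(1) h g] mult_index_sum[OF Rh Rg a b] by simp
    have 2: "\<rho> \<xi>' (h \<otimes>\<^bsub>G\<^esub> g) $$ (c,e) = (\<Sum>r<d \<xi>'. \<rho> \<xi>' h $$ (c,r) * \<rho> \<xi>' g $$ (r,e))"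
      using rho_mult[OF x(2) h g] mult_index_sum[OF Rh' Rg' c e] by simp
    show "(\<Sum>r<d \<xi>'. \<Sum>p<d \<xi>. (\<rho> \<xi> h $$ (a,p) * cnj (\<rho> \<xi>' h $$ (c,r))) *
        (\<rho> \<xi> g $$ (p,b) * cnj (\<rho> \<xi>' g $$ (r,e)))) =
        \<rho> \<xi> (h \<otimes>\<^bsub>G\<^esub> g) $$ (a,b) * cnj (\<rho> \<xi>' (h \<otimes>\<^bsub>G\<^esub> g) $$ (c,e))"
      unfolding 1 2 by (simp add: sum_distrib_left sum_distrib_right mult.commute mult.left_commute)
  qed
  also have "\<dots> = oint \<xi> a b \<xi>' c e"
    unfolding oint_def
    by (rule integral_transl[OF h, where f="\<lambda>g. \<rho> \<xi> g $$ (a,b) * cnj (\<rho> \<xi>' g $$ (c,e))"])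
       (use rho_meas[OF x(1) a b] rho_meas[OF x(2) c e] in measurable)
  also have "\<dots> = X $$ (a,c)" unfolding X_def using a c by simp
  finally show "(\<rho> \<xi> h * X * mat_adjoint (\<rho> \<xi>' h)) $$ (a,c) = X $$ (a,c)" .
qed

end


context hset begin

lemma schur_comm:
  assumes x: "\<xi> \<in> Ghat" "\<xi>' \<in> Ghat" and X: "X \<in> carrier_mat (d \<xi>) (d \<xi>')"
    and inv: "\<forall>h\<in>carrier G. \<rho> \<xi> h * X * mat_adjoint (\<rho> \<xi>' h) = X"
  shows "\<forall>h\<in>carrier G. \<rho> \<xi> h * X = X * \<rho> \<xi>' h"
    and "\<forall>h\<in>carrier G. \<rho> \<xi>' h * mat_adjoint X = mat_adjoint X * \<rho> \<xi> h"
proof (intro ballI)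
  fix h assume h: "h \<in> carrier G"
  have Rh: "\<rho> \<xi> h \<in> carrier_mat (d \<xi>) (d \<xi>)" and Rh': "\<rho> \<xi>' h \<in> carrier_mat (d \<xi>') (d \<xi>')"
    using rho_car x h by auto
  have aRh: "mat_adjoint (\<rho> \<xi> h) \<in> carrier_mat (d \<xi>) (d \<xi>)" using adj_carrier[OF Rh] .
  have aRh': "mat_adjoint (\<rho> \<xi>' h) \<in> carrier_mat (d \<xi>') (d \<xi>')" using adj_carrier[OF Rh'] .
  have aX: "mat_adjoint X \<in> carrier_mat (d \<xi>') (d \<xi>)" using adj_carrier[OF X] .
  have "\<rho> \<xi> h * X = \<rho> \<xi> h * X * (mat_adjoint (\<rho> \<xi>' h) * \<rho> \<xi>' h)"
    using rho_unit[OF x(2) h] Rh X by simp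
  also have "\<dots> = (\<rho> \<xi> h * X * mat_adjoint (\<rho> \<xi>' h)) * \<rho> \<xi>' h"
    using assoc_mult_mat[OF mult_carrier_mat[OF Rh X] aRh' Rh'] by simp
  also have "\<dots> = X * \<rho> \<xi>' h" using inv h by simp
  finally show "\<rho> \<xi> h * X = X * \<rho> \<xi>' h" .
next
  show "\<forall>h\<in>carrier G. \<rho> \<xi>' h * mat_adjoint X = mat_adjoint X * \<rho> \<xi> h"
  proof (intro ballI)
    fix h assume h: "h \<in> carrier G"
    have Rh: "\<rho> \<xi> h \<in> carrier_mat (d \<xi>) (d \<xi>)" and Rh': "\<rho> \<xi>' h \<in> carrier_mat (d \<xi>') (d \<xi>')"
      using rho_car x h by auto
    have aRh: "mat_adjoint (\<rho> \<xi> h) \<in> carrier_mat (d \<xi>) (d \<xi>)" using adj_carrier[OF Rh] .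
    have aRh': "mat_adjoint (\<rho> \<xi>' h) \<in> carrier_mat (d \<xi>') (d \<xi>')" using adj_carrier[OF Rh'] .
    have aX: "mat_adjoint X \<in> carrier_mat (d \<xi>') (d \<xi>)" using adj_carrier[OF X] .
    have "mat_adjoint X = mat_adjoint (\<rho> \<xi> h * X * mat_adjoint (\<rho> \<xi>' h))" using inv h by simp
    also have "\<dots> = \<rho> \<xi>' h * mat_adjoint X * mat_adjoint (\<rho> \<xi> h)"
      using Rh X aRh' Rh' aX aRh
      by (simp add: adj_mult[of _ "d \<xi>" "d \<xi>'" _ "d \<xi>'"] adj_mult[of _ "d \<xi>" "d \<xi>" _ "d \<xi>'"] adj_adj[OF Rh'])
    finally have e: "mat_adjoint X = \<rho> \<xi>' h * mat_adjoint X * mat_adjoint (\<rho> \<xi> h)" .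
    have "\<rho> \<xi>' h * mat_adjoint X = \<rho> \<xi>' h * mat_adjoint X * (mat_adjoint (\<rho> \<xi> h) * \<rho> \<xi> h)"
      using rho_unit[OF x(1) h] Rh' aX by simp
    also have "\<dots> = (\<rho> \<xi>' h * mat_adjoint X * mat_adjoint (\<rho> \<xi> h)) * \<rho> \<xi> h"
      using assoc_mult_mat[OF mult_carrier_mat[OF Rh' aX] aRh Rh] by simp
    also have "\<dots> = mat_adjoint X * \<rho> \<xi> h" using e by simp
    finally show "\<rho> \<xi>' h * mat_adjoint X = mat_adjoint X * \<rho> \<xi> h" .
  qed
qed

lemma schur_offdiag:
  assumes x: "\<xi> \<in> Ghat" "\<xi>' \<in> Ghat" "\<xi> \<noteq> \<xi>'" and X: "X \<in> carrier_mat (d \<xi>) (d \<xi>')"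
    and inv: "\<forall>h\<in>carrier G. \<rho> \<xi> h * X * mat_adjoint (\<rho> \<xi>' h) = X"
  shows "X = 0\<^sub>m (d \<xi>) (d \<xi>')"
proof (rule ccontr)
  assume nz: "X \<noteq> 0\<^sub>m (d \<xi>) (d \<xi>')"
  note c1 = schur_comm(1)[OF x(1,2) X inv] and c2 = schur_comm(2)[OF x(1,2) X inv]
  have aX: "mat_adjoint X \<in> carrier_mat (d \<xi>') (d \<xi>)" using adj_carrier[OF X] .
  define Y where "Y = mat_adjoint X * X"
  define Z where "Z = X * mat_adjoint X"
  have Yc: "Y \<in> carrier_mat (d \<xi>') (d \<xi>')" unfolding Y_def using aX X by auto
  have Zc: "Z \<in> carrier_mat (d \<xi>) (d \<xi>)" unfolding Z_def using aX X by auto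
  have scY: "\<forall>g\<in>carrier G. \<rho> \<xi>' g \<in> carrier_mat (d \<xi>') (d \<xi>')" using rho_car x by auto
  have "\<forall>h\<in>carrier G. \<rho> \<xi>' h * Y = Y * \<rho> \<xi>' h"
  proof (intro ballI)
    fix h assume h: "h \<in> carrier G"
    have Rh: "\<rho> \<xi> h \<in> carrier_mat (d \<xi>) (d \<xi>)" and Rh': "\<rho> \<xi>' h \<in> carrier_mat (d \<xi>') (d \<xi>')"
      using rho_car x h by auto
    have "\<rho> \<xi>' h * Y = (\<rho> \<xi>' h * mat_adjoint X) * X" unfolding Y_def using Rh' aX X by simp
    also have "\<dots> = mat_adjoint X * (\<rho> \<xi> h * X)" using c2 h Rh aX X by simp
    also have "\<dots> = mat_adjoint X * (X * \<rho> \<xi>' h)" using c1 h by simp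
    also have "\<dots> = Y * \<rho> \<xi>' h" unfolding Y_def using Rh' aX X by simp
    finally show "\<rho> \<xi>' h * Y = Y * \<rho> \<xi>' h" .
  qed
  then have "\<exists>c. Y = c \<cdot>\<^sub>m 1\<^sub>m (d \<xi>')" using schur_scalar[OF rho_irr[OF x(2)] scY Yc] by blast
  then obtain c where Yeq: "Y = c \<cdot>\<^sub>m 1\<^sub>m (d \<xi>')" by blast
  have scZ: "\<forall>g\<in>carrier G. \<rho> \<xi> g \<in> carrier_mat (d \<xi>) (d \<xi>)" using rho_car x by auto
  have "\<forall>h\<in>carrier G. \<rho> \<xi> h * Z = Z * \<rho> \<xi> h"
  proof (intro ballI)
    fix h assume h: "h \<in> carrier G"
    have Rh: "\<rho> \<xi> h \<in> carrier_mat (d \<xi>) (d \<xi>)" and Rh': "\<rho> \<xi>' h \<in> carrier_mat (d \<xi>') (d \<xi>')"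
      using rho_car x h by auto
    have "\<rho> \<xi> h * Z = (\<rho> \<xi> h * X) * mat_adjoint X" unfolding Z_def using Rh aX X by simp
    also have "\<dots> = X * (\<rho> \<xi>' h * mat_adjoint X)" using c1 h Rh' aX X by simp
    also have "\<dots> = X * (mat_adjoint X * \<rho> \<xi> h)" using c2 h by simp
    also have "\<dots> = Z * \<rho> \<xi> h" unfolding Z_def using Rh aX X by simp
    finally show "\<rho> \<xi> h * Z = Z * \<rho> \<xi> h" .
  qed
  then have "\<exists>c. Z = c \<cdot>\<^sub>m 1\<^sub>m (d \<xi>)" using schur_scalar[OF rho_irr[OF x(1)] scZ Zc] by blast
  then obtain c' where Zeq: "Z = c' \<cdot>\<^sub>m 1\<^sub>m (d \<xi>)" by blast
  obtain a0 e0 where a0: "a0 < d \<xi>" and e0: "e0 < d \<xi>'" and nz0: "X $$ (a0,e0) \<noteq> 0"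
    using nz X by (metis carrier_matD(1) carrier_matD(2) eq_matI index_zero_mat(1) index_zero_mat(2) index_zero_mat(3))
  have XY: "X * Y = Z * X" unfolding Y_def Z_def using X aX by simp
  have "(X * Y) $$ (a0,e0) = c * X $$ (a0,e0)" unfolding Yeq using X a0 e0 by (simp add: mult_smult_distrib[OF X])
  moreover have "(Z * X) $$ (a0,e0) = c' * X $$ (a0,e0)" unfolding Zeq using X a0 e0 by (simp add: mult_smult_assoc_mat[of _ "d \<xi>" "d \<xi>"])
  ultimately have cc: "c = c'" using XY nz0 by simp
  have "Y $$ (e0,e0) = (\<Sum>a<d \<xi>. complex_of_real ((cmod (X $$ (a,e0)))\<^sup>2))"
    unfolding Y_def by (rule adj_diag[OF X e0])
  moreover have "Y $$ (e0,e0) = c" unfolding Yeq using e0 by simp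
  moreover have "(\<Sum>a<d \<xi>. (cmod (X $$ (a,e0)))\<^sup>2) > 0"
  proof -
    have "(\<Sum>a<d \<xi>. (cmod (X $$ (a,e0)))\<^sup>2) \<ge> (cmod (X $$ (a0,e0)))\<^sup>2"
      using a0 by (intro member_le_sum) auto
    moreover have "(cmod (X $$ (a0,e0)))\<^sup>2 > 0" using nz0 by simp
    ultimately show ?thesis by linarith
  qed
  ultimately have c0: "c \<noteq> 0" by (metis of_real_eq_0_iff of_real_sum less_irrefl)
  have trY: "(\<Sum>e<d \<xi>'. Y $$ (e,e)) = c * of_nat (d \<xi>')" unfolding Yeq by simp
  have trZ: "(\<Sum>a<d \<xi>. Z $$ (a,a)) = c' * of_nat (d \<xi>)" unfolding Zeq by simp
  have "(\<Sum>e<d \<xi>'. Y $$ (e,e)) = (\<Sum>e<d \<xi>'. \<Sum>a<d \<xi>. complex_of_real ((cmod (X $$ (a,e)))\<^sup>2))"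
    unfolding Y_def by (intro sum.cong refl adj_diag[OF X]) auto
  also have "\<dots> = (\<Sum>a<d \<xi>. \<Sum>e<d \<xi>'. complex_of_real ((cmod (X $$ (a,e)))\<^sup>2))" by (rule sum.swap)
  also have "\<dots> = (\<Sum>a<d \<xi>. Z $$ (a,a))"
    unfolding Z_def by (intro sum.cong refl adj_diag'[OF X, symmetric]) auto
  finally have "c * of_nat (d \<xi>') = c * of_nat (d \<xi>)" using trY trZ cc by simp
  then have dd: "d \<xi>' = d \<xi>" using c0 by simp
  define B where "B = (1 / c) \<cdot>\<^sub>m mat_adjoint X"
  have "X * B = (1/c) \<cdot>\<^sub>m Z" unfolding B_def Z_def using X aX by (simp add: mult_smult_distrib[OF X])
  also have "\<dots> = 1\<^sub>m (d \<xi>)" unfolding Zeq cc[symmetric] using c0 by (intro eq_matI) auto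
  finally have XB: "X * B = 1\<^sub>m (d \<xi>)" .
  have "B * X = (1/c) \<cdot>\<^sub>m Y" unfolding B_def Y_def using X aX by (simp add: mult_smult_assoc_mat[OF aX X])
  also have "\<dots> = 1\<^sub>m (d \<xi>')" unfolding Yeq using c0 by (intro eq_matI) auto
  finally have BX: "B * X = 1\<^sub>m (d \<xi>')" .
  have Bc: "B \<in> carrier_mat (d \<xi>') (d \<xi>)" unfolding B_def using aX by simp
  have "invertible_mat X"
    unfolding invertible_mat_def inverts_mat_def square_mat.simps
    using X Bc XB BX dd by (intro conjI exI[of _ B]) auto
  then have "rep_iso G (d \<xi>') (\<rho> \<xi>') (d \<xi>) (\<rho> \<xi>)"
    unfolding rep_iso_def using X dd c1 by (intro conjI bexI[of _ X]) auto
  moreover have "\<not> rep_iso G (d \<xi>') (\<rho> \<xi>') (d \<xi>) (\<rho> \<xi>)"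
    using dual x unfolding complete_dual_def by metis
  ultimately show False by blast
qed

lemma orth:
  assumes x: "\<xi> \<in> Ghat" "\<xi>' \<in> Ghat" and a: "a < d \<xi>" "b < d \<xi>" and c: "c < d \<xi>'" "e < d \<xi>'"
  shows "oint \<xi> a b \<xi>' c e = (if \<xi> = \<xi>' \<and> a = c \<and> b = e then 1 / of_nat (d \<xi>) else 0)"
proof -
  define X where "X = mat (d \<xi>) (d \<xi>') (\<lambda>(a,c). oint \<xi> a b \<xi>' c e)"
  have Xc: "X \<in> carrier_mat (d \<xi>) (d \<xi>')" unfolding X_def by simp
  have inv: "\<forall>h\<in>carrier G. \<rho> \<xi> h * X * mat_adjoint (\<rho> \<xi>' h) = X"
    unfolding X_def using X_inv[OF x a(2) c(2)] by auto
  have Xac: "oint \<xi> a b \<xi>' c e = X $$ (a,c)" unfolding X_def using a c by simp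
  show ?thesis
  proof (cases "\<xi> = \<xi>'")
    case False
    then show ?thesis using schur_offdiag[OF x False Xc inv] Xac a c by simp
  next
    case True
    have "\<exists>k. X = k \<cdot>\<^sub>m 1\<^sub>m (d \<xi>)"
      using schur_scalar[OF rho_irr[OF x(1)], of X] Xc schur_comm(1)[OF x Xc inv] rho_car x True by auto
    then obtain k where Xk: "X = k \<cdot>\<^sub>m 1\<^sub>m (d \<xi>)" by blast
    interpret prob_space M by (rule prob)
    have "(\<Sum>p<d \<xi>. X $$ (p,p)) = (\<Sum>p<d \<xi>. oint \<xi> p b \<xi> p e)" unfolding X_def True by simp
    also have "\<dots> = (\<integral>g. (\<Sum>p<d \<xi>. \<rho> \<xi> g $$ (p,b) * cnj (\<rho> \<xi> g $$ (p,e))) \<partial>M)"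
      unfolding oint_def
      by (rule Bochner_Integration.integral_sum[symmetric], rule coef_integrable) (use x a c True in auto)
    also have "\<dots> = (\<integral>g. (if e = b then 1 else 0) \<partial>M)"
    proof (rule Bochner_Integration.integral_cong[OF refl])
      fix g assume "g \<in> space M"
      then have g: "g \<in> carrier G" using space_M by auto
      show "(\<Sum>p<d \<xi>. \<rho> \<xi> g $$ (p,b) * cnj (\<rho> \<xi> g $$ (p,e))) = (if e = b then 1 else 0)"
        using col_orth[OF x(1) g, of e b] a c True by (simp add: mult.commute)
    qed
    also have "\<dots> = (if e = b then 1 else 0)" by (simp add: prob_space)
    finally have tr: "(\<Sum>p<d \<xi>. X $$ (p,p)) = (if e = b then 1 else 0)" .
    have "(\<Sum>p<d \<xi>. X $$ (p,p)) = k * of_nat (d \<xi>)" unfolding Xk by simp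
    then have "k = (if e = b then 1 else 0) / of_nat (d \<xi>)" using tr a by (auto simp: field_simps)
    then show ?thesis using Xac Xk a c True by auto
  qed
qed

end


lemma L2_integrable_prod:
  assumes f: "L2 M f" and h: "L2 M h"
  shows "integrable M (\<lambda>g. f g * cnj (h g))"
proof (rule Bochner_Integration.integrable_bound)
  show "integrable M (\<lambda>g. (cmod (f g))\<^sup>2 + (cmod (h g))\<^sup>2)" using f h unfolding L2_def by auto
  show "(\<lambda>g. f g * cnj (h g)) \<in> borel_measurable M" using f h unfolding L2_def
    by (intro borel_measurable_times borel_measurable_cnj) auto
  show "AE x in M. norm (f x * cnj (h x)) \<le> norm ((cmod (f x))\<^sup>2 + (cmod (h x))\<^sup>2)"
  proof (rule AE_I2)
    fix x
    have "cmod (f x) * cmod (h x) \<le> (cmod (f x))\<^sup>2 + (cmod (h x))\<^sup>2"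
    proof -
      have "0 \<le> (cmod (f x) - cmod (h x))\<^sup>2" by simp
      then have "2 * (cmod (f x) * cmod (h x)) \<le> (cmod (f x))\<^sup>2 + (cmod (h x))\<^sup>2"
        by (simp add: power2_diff)
      moreover have "0 \<le> cmod (f x) * cmod (h x)" by simp
      ultimately show ?thesis by linarith
    qed
    then show "norm (f x * cnj (h x)) \<le> norm ((cmod (f x))\<^sup>2 + (cmod (h x))\<^sup>2)"
      by (simp add: norm_mult)
  qed
qed

lemma L2_measurable: "L2 M f \<Longrightarrow> f \<in> borel_measurable M" unfolding L2_def by auto

lemma L2_sq_int: "L2 M f \<Longrightarrow> integrable M (\<lambda>g. (cmod (f g))\<^sup>2)" unfolding L2_def by auto

lemma L2_add: assumes f: "L2 M f" and h: "L2 M h" shows "L2 M (\<lambda>g. f g + h g)"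
  unfolding L2_def
proof
  show "(\<lambda>g. f g + h g) \<in> borel_measurable M" using f h unfolding L2_def
    by (intro borel_measurable_add) auto
  show "integrable M (\<lambda>g. (cmod (f g + h g))\<^sup>2)"
  proof (rule Bochner_Integration.integrable_bound)
    show "integrable M (\<lambda>g. 2 * (cmod (f g))\<^sup>2 + 2 * (cmod (h g))\<^sup>2)" using f h unfolding L2_def by auto
    have [measurable]: "f \<in> borel_measurable M" "h \<in> borel_measurable M" using f h unfolding L2_def by auto
    show "(\<lambda>g. (cmod (f g + h g))\<^sup>2) \<in> borel_measurable M" by measurable
    show "AE x in M. norm ((cmod (f x + h x))\<^sup>2) \<le> norm (2 * (cmod (f x))\<^sup>2 + 2 * (cmod (h x))\<^sup>2)"
    proof (rule AE_I2)
      fix x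
      have t: "cmod (f x + h x) \<le> cmod (f x) + cmod (h x)" by (rule norm_triangle_ineq)
      have "(cmod (f x + h x))\<^sup>2 \<le> (cmod (f x) + cmod (h x))\<^sup>2"
        using t by (intro power_mono) auto
      also have "\<dots> \<le> 2 * (cmod (f x))\<^sup>2 + 2 * (cmod (h x))\<^sup>2"
      proof -
        have "0 \<le> (cmod (f x) - cmod (h x))\<^sup>2" by simp
        then show ?thesis by (simp add: power2_diff power2_sum)
      qed
      finally show "norm ((cmod (f x + h x))\<^sup>2) \<le> norm (2 * (cmod (f x))\<^sup>2 + 2 * (cmod (h x))\<^sup>2)"
        by simp
    qed
  qed
qed

lemma L2_cmult: assumes f: "L2 M f" shows "L2 M (\<lambda>g. c * f g)"
  using f unfolding L2_def by (auto simp: norm_mult power_mult_distrib)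

lemma L2_uminus: assumes f: "L2 M f" shows "L2 M (\<lambda>g. - f g)"
  using L2_cmult[OF f, of "-1"] by simp

lemma L2_diff: assumes f: "L2 M f" and h: "L2 M h" shows "L2 M (\<lambda>g. f g - h g)"
  using L2_add[OF f L2_uminus[OF h]] by simp

lemma L2_zero: "L2 M (\<lambda>g. 0)" unfolding L2_def by auto

lemma L2_sum: "finite I \<Longrightarrow> (\<And>i. i \<in> I \<Longrightarrow> L2 M (f i)) \<Longrightarrow> L2 M (\<lambda>g. \<Sum>i\<in>I. f i g)"
proof (induction I rule: finite_induct)
  case empty then show ?case using L2_zero by simp
next
  case (insert x F) then show ?case using L2_add[of M "f x" "\<lambda>g. \<Sum>i\<in>F. f i g"] by simp
qed

lemma frob2_carrier: "A \<in> carrier_mat n n \<Longrightarrow> frob2 A = (\<Sum>a<n. \<Sum>b<n. (cmod (A $$ (a,b)))\<^sup>2)"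
  unfolding frob2_def by auto

lemma frob2_nonneg: "frob2 A \<ge> 0" unfolding frob2_def by (auto intro!: sum_nonneg)

lemma integral_sum3:
  fixes f :: "'i \<Rightarrow> nat \<Rightarrow> nat \<Rightarrow> 'a \<Rightarrow> complex"
  assumes int: "\<And>i a b. i \<in> F \<Longrightarrow> a < n i \<Longrightarrow> b < n i \<Longrightarrow> integrable M (f i a b)"
  shows "(\<integral>g. (\<Sum>i\<in>F. \<Sum>a<n i. \<Sum>b<n i. c i a b * f i a b g) \<partial>M) =
    (\<Sum>i\<in>F. \<Sum>a<n i. \<Sum>b<n i. c i a b * (\<integral>g. f i a b g \<partial>M))"
proof -
  have "(\<integral>g. (\<Sum>i\<in>F. \<Sum>a<n i. \<Sum>b<n i. c i a b * f i a b g) \<partial>M) =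
    (\<Sum>i\<in>F. \<integral>g. (\<Sum>a<n i. \<Sum>b<n i. c i a b * f i a b g) \<partial>M)"
    by (rule Bochner_Integration.integral_sum) (auto intro!: integrable_sum integrable_mult_right int)
  also have "\<dots> = (\<Sum>i\<in>F. \<Sum>a<n i. \<integral>g. (\<Sum>b<n i. c i a b * f i a b g) \<partial>M)"
    by (intro sum.cong refl Bochner_Integration.integral_sum) (auto intro!: integrable_sum integrable_mult_right int)
  also have "\<dots> = (\<Sum>i\<in>F. \<Sum>a<n i. \<Sum>b<n i. \<integral>g. c i a b * f i a b g \<partial>M)"
    by (intro sum.cong refl Bochner_Integration.integral_sum) (auto intro!: integrable_sum integrable_mult_right int)
  finally show ?thesis by simp
qed

lemma frob2_cnj: "A \<in> carrier_mat n n \<Longrightarrow>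
  (\<Sum>a<n. \<Sum>b<n. cnj (A $$ (a,b)) * A $$ (a,b)) = complex_of_real (frob2 A)"
  by (simp add: frob2_carrier cnj_mult_sq)

context hset begin

lemma d_pos: "\<xi> \<in> Ghat \<Longrightarrow> d \<xi> \<ge> 1" using rho_irr unfolding irreducible_rep_def by auto

lemma rho_L2: assumes "\<xi> \<in> Ghat" "a < d \<xi>" "b < d \<xi>" shows "L2 M (\<lambda>g. \<rho> \<xi> g $$ (a,b))"
  unfolding L2_def
proof
  interpret prob_space M by (rule prob)
  show m: "(\<lambda>g. \<rho> \<xi> g $$ (a, b)) \<in> borel_measurable M" using rho_meas assms by auto
  show "integrable M (\<lambda>g. (cmod (\<rho> \<xi> g $$ (a, b)))\<^sup>2)"
  proof (rule integrable_const_bound[where B=1])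
    show "AE x in M. norm ((cmod (\<rho> \<xi> x $$ (a, b)))\<^sup>2) \<le> 1"
      using rho_bound[OF assms(1) _ assms(2,3)] space_M by (intro AE_I2) (simp add: power_le_one)
  qed (use m in measurable)
qed

lemma fourier_car: "fourier M d \<rho> f \<xi> \<in> carrier_mat (d \<xi>) (d \<xi>)"
  unfolding fourier_def by auto

lemma fourier_entry:
  assumes "\<xi> \<in> Ghat" "a < d \<xi>" "b < d \<xi>"
  shows "fourier M d \<rho> f \<xi> $$ (a,b) = (\<integral>g. f g * cnj (\<rho> \<xi> g $$ (b,a)) \<partial>M)"
  unfolding fourier_def using assms
  by (auto intro!: Bochner_Integration.integral_cong simp: adj_index[OF rho_car] space_M)

definition recon :: "'x set \<Rightarrow> ('x \<Rightarrow> complex mat) \<Rightarrow> 'g \<Rightarrow> complex" where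
  "recon F C g = (\<Sum>\<xi>\<in>F. of_nat (d \<xi>) * (\<Sum>a<d \<xi>. \<Sum>b<d \<xi>. C \<xi> $$ (a,b) * \<rho> \<xi> g $$ (b,a)))"

lemma recon_L2: "finite F \<Longrightarrow> F \<subseteq> Ghat \<Longrightarrow> L2 M (recon F C)"
  unfolding recon_def
  by (intro L2_sum L2_cmult rho_L2) auto

lemma ip_recon:
  assumes f: "L2 M f" and F: "finite F" "F \<subseteq> Ghat"
  shows "(\<integral>g. f g * cnj (recon F C g) \<partial>M) =
    (\<Sum>\<xi>\<in>F. of_nat (d \<xi>) * (\<Sum>a<d \<xi>. \<Sum>b<d \<xi>. cnj (C \<xi> $$ (a,b)) * fourier M d \<rho> f \<xi> $$ (a,b)))"
proof -
  have int: "integrable M (\<lambda>g. f g * cnj (\<rho> \<xi> g $$ (b,a)))" if "\<xi> \<in> F" "a < d \<xi>" "b < d \<xi>" for \<xi> a b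
    using L2_integrable_prod[OF f rho_L2] that F by auto
  have "(\<integral>g. f g * cnj (recon F C g) \<partial>M) = (\<integral>g. (\<Sum>\<xi>\<in>F. \<Sum>a<d \<xi>. \<Sum>b<d \<xi>.
      (of_nat (d \<xi>) * cnj (C \<xi> $$ (a,b))) * (f g * cnj (\<rho> \<xi> g $$ (b,a)))) \<partial>M)"
    unfolding recon_def
    by (intro Bochner_Integration.integral_cong refl) (simp add: sum_distrib_left mult_ac)
  also have "\<dots> = (\<Sum>\<xi>\<in>F. \<Sum>a<d \<xi>. \<Sum>b<d \<xi>. (of_nat (d \<xi>) * cnj (C \<xi> $$ (a,b))) *
      (\<integral>g. f g * cnj (\<rho> \<xi> g $$ (b,a)) \<partial>M))"
    by (rule integral_sum3) (use int in auto)
  also have "\<dots> = (\<Sum>\<xi>\<in>F. of_nat (d \<xi>) * (\<Sum>a<d \<xi>. \<Sum>b<d \<xi>. cnj (C \<xi> $$ (a,b)) * fourier M d \<rho> f \<xi> $$ (a,b)))"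
  proof (rule sum.cong[OF refl])
    fix \<xi> assume x: "\<xi> \<in> F"
    have "(\<Sum>a<d \<xi>. \<Sum>b<d \<xi>. (of_nat (d \<xi>) * cnj (C \<xi> $$ (a,b))) *
      (\<integral>g. f g * cnj (\<rho> \<xi> g $$ (b,a)) \<partial>M)) = (\<Sum>a<d \<xi>. \<Sum>b<d \<xi>. of_nat (d \<xi>) * (cnj (C \<xi> $$ (a,b)) *
        fourier M d \<rho> f \<xi> $$ (a,b)))"
      using x F by (intro sum.cong refl) (simp add: fourier_entry[of \<xi>] subsetD)
    then show "(\<Sum>a<d \<xi>. \<Sum>b<d \<xi>. (of_nat (d \<xi>) * cnj (C \<xi> $$ (a,b))) *
      (\<integral>g. f g * cnj (\<rho> \<xi> g $$ (b,a)) \<partial>M)) = of_nat (d \<xi>) * (\<Sum>a<d \<xi>. \<Sum>b<d \<xi>. cnj (C \<xi> $$ (a,b)) *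
        fourier M d \<rho> f \<xi> $$ (a,b))"
      by (simp add: sum_distrib_left)
  qed
  finally show ?thesis .
qed

end


lemma double_delta:
  assumes "a < (n::nat)" "b < n"
  shows "(\<Sum>a'<n. \<Sum>b'<n. if a' = a \<and> b' = b then f a' b' else 0) = (f a b :: complex)"
proof -
  have "(\<Sum>a'<n. \<Sum>b'<n. if a' = a \<and> b' = b then f a' b' else 0) = (\<Sum>a'<n. if a' = a then f a' b else 0)"
  proof (rule sum.cong[OF refl])
    fix a' show "(\<Sum>b'<n. if a' = a \<and> b' = b then f a' b' else 0) = (if a' = a then f a' b else 0)"
    proof (cases "a' = a")
      case True
      have "(\<Sum>b'<n. if b' = b then f a b' else 0) = (if b \<in> {..<n} then f a b else 0)"
        by (rule sum.delta) simp
      then show ?thesis using True assms by simp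
    qed simp
  qed
  also have "\<dots> = (if a \<in> {..<n} then f a b else 0)" by (rule sum.delta) simp
  also have "\<dots> = f a b" using assms by simp
  finally show ?thesis .
qed

lemma L2_norm_complex: "L2 M f \<Longrightarrow> (\<integral>g. f g * cnj (f g) \<partial>M) = complex_of_real (\<integral>g. (cmod (f g))\<^sup>2 \<partial>M)"
proof -
  have "(\<integral>g. f g * cnj (f g) \<partial>M) = (\<integral>g. complex_of_real ((cmod (f g))\<^sup>2) \<partial>M)"
    by (intro Bochner_Integration.integral_cong refl) (rule complex_norm_square[symmetric])
  also have "\<dots> = complex_of_real (\<integral>g. (cmod (f g))\<^sup>2 \<partial>M)" by (rule integral_complex_of_real)
  finally show ?thesis .
qed

context hset begin

lemma recon_fourier:
  assumes F: "finite F" "F \<subseteq> Ghat" and x': "\<xi>' \<in> Ghat" and ab: "a < d \<xi>'" "b < d \<xi>'"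
  shows "fourier M d \<rho> (recon F C) \<xi>' $$ (a,b) = (if \<xi>' \<in> F then C \<xi>' $$ (a,b) else 0)"
proof -
  have "fourier M d \<rho> (recon F C) \<xi>' $$ (a,b) = (\<integral>g. recon F C g * cnj (\<rho> \<xi>' g $$ (b,a)) \<partial>M)"
    using fourier_entry[OF x' ab] .
  also have "\<dots> = (\<integral>g. (\<Sum>\<xi>\<in>F. \<Sum>a'<d \<xi>. \<Sum>b'<d \<xi>. (of_nat (d \<xi>) * C \<xi> $$ (a',b')) *
        (\<rho> \<xi> g $$ (b',a') * cnj (\<rho> \<xi>' g $$ (b,a)))) \<partial>M)"
    unfolding recon_def
    by (intro Bochner_Integration.integral_cong refl) (simp add: sum_distrib_left sum_distrib_right mult_ac)
  also have "\<dots> = (\<Sum>\<xi>\<in>F. \<Sum>a'<d \<xi>. \<Sum>b'<d \<xi>. (of_nat (d \<xi>) * C \<xi> $$ (a',b')) * oint \<xi> b' a' \<xi>' b a)"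
    unfolding oint_def
    by (rule integral_sum3) (use F x' ab in \<open>auto intro!: coef_integrable\<close>)
  also have "\<dots> = (\<Sum>\<xi>\<in>F. if \<xi> = \<xi>' then C \<xi>' $$ (a,b) else 0)"
  proof (rule sum.cong[OF refl])
    fix \<xi> assume x: "\<xi> \<in> F"
    then have xG: "\<xi> \<in> Ghat" using F by auto
    show "(\<Sum>a'<d \<xi>. \<Sum>b'<d \<xi>. (of_nat (d \<xi>) * C \<xi> $$ (a',b')) * oint \<xi> b' a' \<xi>' b a) =
      (if \<xi> = \<xi>' then C \<xi>' $$ (a,b) else 0)"
    proof (cases "\<xi> = \<xi>'")
      case False
      then show ?thesis using orth[OF xG x'] ab by simp
    next
      case True
      have d0: "of_nat (d \<xi>) \<noteq> (0::complex)" using d_pos[OF xG] by simp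
      have "(\<Sum>a'<d \<xi>. \<Sum>b'<d \<xi>. (of_nat (d \<xi>) * C \<xi> $$ (a',b')) * oint \<xi> b' a' \<xi>' b a) =
        (\<Sum>a'<d \<xi>. \<Sum>b'<d \<xi>. if a' = a \<and> b' = b then (of_nat (d \<xi>) * C \<xi> $$ (a',b')) * (1 / of_nat (d \<xi>)) else 0)"
        using True orth[OF xG x'] ab by (intro sum.cong refl) auto
      also have "\<dots> = (of_nat (d \<xi>) * C \<xi> $$ (a,b)) * (1 / of_nat (d \<xi>))"
        using ab True by (intro double_delta) auto
      also have "\<dots> = C \<xi>' $$ (a,b)" using d0 True by simp
      finally show ?thesis using True by simp
    qed
  qed
  also have "\<dots> = (if \<xi>' \<in> F then C \<xi>' $$ (a,b) else 0)" using F by (simp add: sum.delta')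
  finally show ?thesis .
qed

lemma recon_norm:
  assumes F: "finite F" "F \<subseteq> Ghat" and C: "\<And>\<xi>. \<xi> \<in> F \<Longrightarrow> C \<xi> \<in> carrier_mat (d \<xi>) (d \<xi>)"
  shows "(\<integral>g. recon F C g * cnj (recon F C g) \<partial>M) = complex_of_real (\<Sum>\<xi>\<in>F. real (d \<xi>) * frob2 (C \<xi>))"
proof -
  have "(\<integral>g. recon F C g * cnj (recon F C g) \<partial>M) =
    (\<Sum>\<xi>\<in>F. of_nat (d \<xi>) * (\<Sum>a<d \<xi>. \<Sum>b<d \<xi>. cnj (C \<xi> $$ (a,b)) * fourier M d \<rho> (recon F C) \<xi> $$ (a,b)))"
    by (rule ip_recon[OF recon_L2[OF F] F])
  also have "\<dots> = (\<Sum>\<xi>\<in>F. of_nat (d \<xi>) * (\<Sum>a<d \<xi>. \<Sum>b<d \<xi>. cnj (C \<xi> $$ (a,b)) * C \<xi> $$ (a,b)))"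
  proof (rule sum.cong[OF refl])
    fix \<xi> assume x: "\<xi> \<in> F"
    then have xG: "\<xi> \<in> Ghat" using F by auto
    show "of_nat (d \<xi>) * (\<Sum>a<d \<xi>. \<Sum>b<d \<xi>. cnj (C \<xi> $$ (a,b)) * fourier M d \<rho> (recon F C) \<xi> $$ (a,b)) =
      of_nat (d \<xi>) * (\<Sum>a<d \<xi>. \<Sum>b<d \<xi>. cnj (C \<xi> $$ (a,b)) * C \<xi> $$ (a,b))"
      using x by (simp add: recon_fourier[OF F xG])
  qed
  also have "\<dots> = (\<Sum>\<xi>\<in>F. of_nat (d \<xi>) * complex_of_real (frob2 (C \<xi>)))"
    using C by (intro sum.cong refl) (simp add: frob2_cnj)
  finally show ?thesis by simp
qed

lemma recon_norm_real:
  assumes F: "finite F" "F \<subseteq> Ghat" and C: "\<And>\<xi>. \<xi> \<in> F \<Longrightarrow> C \<xi> \<in> carrier_mat (d \<xi>) (d \<xi>)"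
  shows "(\<integral>g. (cmod (recon F C g))\<^sup>2 \<partial>M) = (\<Sum>\<xi>\<in>F. real (d \<xi>) * frob2 (C \<xi>))"
proof -
  have "complex_of_real (\<integral>g. (cmod (recon F C g))\<^sup>2 \<partial>M) = complex_of_real (\<Sum>\<xi>\<in>F. real (d \<xi>) * frob2 (C \<xi>))"
    by (metis recon_norm[OF F C] L2_norm_complex[OF recon_L2[OF F]])
  then show ?thesis by (simp only: of_real_eq_iff)
qed

lemma bessel:
  assumes f: "L2 M f" and F: "finite F" "F \<subseteq> Ghat"
  shows "(\<Sum>\<xi>\<in>F. real (d \<xi>) * frob2 (fourier M d \<rho> f \<xi>)) \<le> (\<integral>g. (cmod (f g))\<^sup>2 \<partial>M)"
proof -
  define C where "C = fourier M d \<rho> f"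
  define P where "P = recon F C"
  define S where "S = (\<Sum>\<xi>\<in>F. real (d \<xi>) * frob2 (C \<xi>))"
  have P: "L2 M P" unfolding P_def by (rule recon_L2[OF F])
  have Cc: "\<And>\<xi>. C \<xi> \<in> carrier_mat (d \<xi>) (d \<xi>)" unfolding C_def by (rule fourier_car)
  have A: "(\<integral>g. f g * cnj (P g) \<partial>M) = complex_of_real S"
  proof -
    have "(\<integral>g. f g * cnj (P g) \<partial>M) = (\<Sum>\<xi>\<in>F. of_nat (d \<xi>) * (\<Sum>a<d \<xi>. \<Sum>b<d \<xi>. cnj (C \<xi> $$ (a,b)) * C \<xi> $$ (a,b)))"
      unfolding P_def using ip_recon[OF f F] C_def by simp
    also have "\<dots> = (\<Sum>\<xi>\<in>F. of_nat (d \<xi>) * complex_of_real (frob2 (C \<xi>)))"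
      using Cc by (intro sum.cong refl) (simp add: frob2_cnj)
    finally show ?thesis unfolding S_def by simp
  qed
  have B: "(\<integral>g. P g * cnj (P g) \<partial>M) = complex_of_real S"
    unfolding P_def S_def by (rule recon_norm[OF F Cc])
  have A': "(\<integral>g. P g * cnj (f g) \<partial>M) = complex_of_real S"
  proof -
    have "(\<integral>g. P g * cnj (f g) \<partial>M) = (\<integral>g. cnj (f g * cnj (P g)) \<partial>M)" by (simp add: mult.commute)
    also have "\<dots> = cnj (\<integral>g. f g * cnj (P g) \<partial>M)" by (rule Bochner_Integration.integral_cnj)
    finally show ?thesis using A by simp
  qed
  have i1: "integrable M (\<lambda>g. f g * cnj (f g))" using L2_integrable_prod[OF f f] .
  have i2: "integrable M (\<lambda>g. f g * cnj (P g))" using L2_integrable_prod[OF f P] .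
  have i3: "integrable M (\<lambda>g. P g * cnj (f g))" using L2_integrable_prod[OF P f] .
  have i4: "integrable M (\<lambda>g. P g * cnj (P g))" using L2_integrable_prod[OF P P] .
  have "(\<integral>g. (f g - P g) * cnj (f g - P g) \<partial>M) =
     (\<integral>g. (f g * cnj (f g) - f g * cnj (P g)) - (P g * cnj (f g) - P g * cnj (P g)) \<partial>M)"
    by (intro Bochner_Integration.integral_cong refl) (simp add: algebra_simps)
  also have "\<dots> = ((\<integral>g. f g * cnj (f g) \<partial>M) - (\<integral>g. f g * cnj (P g) \<partial>M)) -
       ((\<integral>g. P g * cnj (f g) \<partial>M) - (\<integral>g. P g * cnj (P g) \<partial>M))"
    using i1 i2 i3 i4 by simp
  also have "\<dots> = complex_of_real ((\<integral>g. (cmod (f g))\<^sup>2 \<partial>M) - S)"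
    using A A' B L2_norm_complex[OF f] by simp
  finally have "complex_of_real (\<integral>g. (cmod (f g - P g))\<^sup>2 \<partial>M) = complex_of_real ((\<integral>g. (cmod (f g))\<^sup>2 \<partial>M) - S)"
    using L2_norm_complex[OF L2_diff[OF f P]] by simp
  then have "(\<integral>g. (cmod (f g - P g))\<^sup>2 \<partial>M) = (\<integral>g. (cmod (f g))\<^sup>2 \<partial>M) - S"
    using of_real_eq_iff by blast
  moreover have "(\<integral>g. (cmod (f g - P g))\<^sup>2 \<partial>M) \<ge> 0" by (intro integral_nonneg_AE) auto
  ultimately show ?thesis unfolding S_def C_def by simp
qed

end


lemma L1_le_L2:
  assumes P: "prob_space M" and u: "L2 M u" and t: "t > 0"
    and b: "(\<integral>x. (cmod (u x))\<^sup>2 \<partial>M) \<le> t\<^sup>2"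
  shows "integrable M (\<lambda>x. cmod (u x))" and "(\<integral>x. cmod (u x) \<partial>M) \<le> t"
proof -
  interpret prob_space M by (rule P)
  have pw: "cmod (u x) \<le> t / 2 + (cmod (u x))\<^sup>2 / (2 * t)" for x
  proof -
    have "0 \<le> (cmod (u x) - t)\<^sup>2" by simp
    then have "2 * cmod (u x) * t \<le> (cmod (u x))\<^sup>2 + t\<^sup>2" by (simp add: power2_diff)
    then have "2 * t * cmod (u x) \<le> t\<^sup>2 + (cmod (u x))\<^sup>2" by (simp add: algebra_simps)
    then show ?thesis using t by (simp add: field_simps power2_eq_square)
  qed
  have i2: "integrable M (\<lambda>x. t / 2 + (cmod (u x))\<^sup>2 / (2 * t))"
    using u unfolding L2_def by auto
  show i1: "integrable M (\<lambda>x. cmod (u x))"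
  proof (rule Bochner_Integration.integrable_bound[OF i2])
    show "(\<lambda>x. cmod (u x)) \<in> borel_measurable M" using u unfolding L2_def by auto
    show "AE x in M. norm (cmod (u x)) \<le> norm (t / 2 + (cmod (u x))\<^sup>2 / (2 * t))"
      using pw t by (intro AE_I2) (smt (verit) norm_ge_zero real_norm_def zero_le_divide_iff zero_le_power2)
  qed
  have "(\<integral>x. cmod (u x) \<partial>M) \<le> (\<integral>x. t / 2 + (cmod (u x))\<^sup>2 / (2 * t) \<partial>M)"
    by (rule integral_mono[OF i1 i2 pw])
  also have "\<dots> = t / 2 + (\<integral>x. (cmod (u x))\<^sup>2 \<partial>M) / (2 * t)"
    using u unfolding L2_def by (simp add: prob_space)
  also have "\<dots> \<le> t / 2 + t\<^sup>2 / (2 * t)"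
    using b t by (intro add_left_mono divide_right_mono) auto
  also have "\<dots> = t" using t by (simp add: power2_eq_square)
  finally show "(\<integral>x. cmod (u x) \<partial>M) \<le> t" .
qed

lemma L2_complete:
  fixes f :: "nat \<Rightarrow> 'a \<Rightarrow> complex" and e :: "nat \<Rightarrow> real"
  assumes P: "prob_space M" and f: "\<And>N. L2 M (f N)" and e: "e \<longlonglongrightarrow> 0"
    and cau: "\<And>m N. m \<le> N \<Longrightarrow> (\<integral>x. (cmod (f N x - f m x))\<^sup>2 \<partial>M) \<le> e m"
  shows "\<exists>h. L2 M h \<and> (\<forall>m. (\<integral>x. (cmod (h x - f m x))\<^sup>2 \<partial>M) \<le> e m)"
proof -
  interpret prob_space M by (rule P)
  have fm[measurable]: "f N \<in> borel_measurable M" for N using f unfolding L2_def by auto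
  have e0: "e m \<ge> 0" for m using cau[of m m] by simp
  have "\<forall>k. \<exists>N. \<forall>n\<ge>N. e n \<le> (1/4)^k"
  proof
    fix k :: nat
    have "eventually (\<lambda>n. e n < (1/4)^k) sequentially"
      using order_tendstoD(2)[OF e, of "(1/4)^k"] by simp
    then show "\<exists>N. \<forall>n\<ge>N. e n \<le> (1/4)^k" unfolding eventually_sequentially by (meson less_imp_le)
  qed
  then obtain N where N: "\<And>k n. n \<ge> N k \<Longrightarrow> e n \<le> (1/4)^k" by metis
  define s where "s k = k + Max (N ` {..k})" for k
  have sN: "N k \<le> s k" for k unfolding s_def by (simp add: trans_le_add2)
  have s_ge: "k \<le> s k" for k unfolding s_def by simp
  have s_suc: "s k < s (Suc k)" for k
  proof -
    have "Max (N ` {..k}) \<le> Max (N ` {..Suc k})" by (intro Max_mono) auto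
    then show ?thesis unfolding s_def by linarith
  qed
  have s_mono: "strict_mono s" using s_suc by (simp add: strict_mono_Suc_iff)
  define D where "D k x = cmod (f (s (Suc k)) x - f (s k) x)" for k x
  have Dnn: "D k x \<ge> 0" for k x by (simp add: D_def)
  have Dm[measurable]: "D k \<in> borel_measurable M" for k unfolding D_def by measurable
  have Dint: "integrable M (D k) \<and> (\<integral>x. D k x \<partial>M) \<le> (1/2)^k" for k
  proof -
    have u: "L2 M (\<lambda>x. f (s (Suc k)) x - f (s k) x)" by (intro L2_diff f)
    have "(\<integral>x. (cmod (f (s (Suc k)) x - f (s k) x))\<^sup>2 \<partial>M) \<le> e (s k)"
      using cau s_suc[of k] by simp
    also have "\<dots> \<le> (1/4)^k" using N sN by blast
    also have "\<dots> = ((1/2)^k)\<^sup>2" by (simp add: power_mult_distrib[symmetric] power2_eq_square power_mult[symmetric] mult.commute)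
    finally have b: "(\<integral>x. (cmod (f (s (Suc k)) x - f (s k) x))\<^sup>2 \<partial>M) \<le> ((1/2)^k)\<^sup>2" .
    show ?thesis using L1_le_L2[OF P u _ b] unfolding D_def by simp
  qed
  have "(\<integral>\<^sup>+x. (\<Sum>k. ennreal (D k x)) \<partial>M) = (\<Sum>k. \<integral>\<^sup>+x. ennreal (D k x) \<partial>M)"
    by (rule nn_integral_suminf) measurable
  also have "\<dots> = (\<Sum>k. ennreal (\<integral>x. D k x \<partial>M))"
    using Dint Dnn by (intro suminf_cong nn_integral_eq_integral) auto
  also have "\<dots> \<le> (\<Sum>k. ennreal ((1/2)^k))"
    using Dint by (intro suminf_le summableI) auto
  also have "\<dots> = ennreal (\<Sum>k. (1/2::real)^k)"
    by (rule suminf_ennreal2) auto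
  also have "\<dots> < \<infinity>" by simp
  finally have fin: "(\<integral>\<^sup>+x. (\<Sum>k. ennreal (D k x)) \<partial>M) \<noteq> \<infinity>" by simp
  have "AE x in M. (\<Sum>k. ennreal (D k x)) \<noteq> \<infinity>"
    by (rule nn_integral_noteq_infinite[OF _ fin]) measurable
  then have AEconv: "AE x in M. (\<lambda>k. f (s k) x) \<longlonglongrightarrow> lim (\<lambda>k. f (s k) x)"
  proof (rule eventually_mono)
    fix x assume "(\<Sum>k. ennreal (D k x)) \<noteq> \<infinity>"
    then have sm: "summable (\<lambda>k. D k x)"
      by (intro summable_suminf_not_top) (auto simp: D_def)
    then have sm': "summable (\<lambda>k. f (s (Suc k)) x - f (s k) x)"
      unfolding D_def by (rule summable_norm_cancel)
    have "(\<lambda>n. f (s 0) x + (\<Sum>k<n. f (s (Suc k)) x - f (s k) x)) \<longlonglongrightarrow>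
        f (s 0) x + (\<Sum>k. f (s (Suc k)) x - f (s k) x)"
      by (intro tendsto_add tendsto_const summable_LIMSEQ sm')
    moreover have "f (s 0) x + (\<Sum>k<n. f (s (Suc k)) x - f (s k) x) = f (s n) x" for n
      by (simp add: sum_lessThan_telescope[where f="\<lambda>k. f (s k) x"])
    ultimately have "(\<lambda>n. f (s n) x) \<longlonglongrightarrow> f (s 0) x + (\<Sum>k. f (s (Suc k)) x - f (s k) x)" by simp
    then show "(\<lambda>k. f (s k) x) \<longlonglongrightarrow> lim (\<lambda>k. f (s k) x)"
      using convergentI convergent_LIMSEQ_iff by blast
  qed
  define h where "h x = lim (\<lambda>k. f (s k) x)" for x
  have hm[measurable]: "h \<in> borel_measurable M" unfolding h_def by measurable
  have bound: "(\<integral>\<^sup>+x. ennreal ((cmod (h x - f m x))\<^sup>2) \<partial>M) \<le> ennreal (e m)" for m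
  proof -
    have "(\<integral>\<^sup>+x. ennreal ((cmod (h x - f m x))\<^sup>2) \<partial>M) =
        (\<integral>\<^sup>+x. liminf (\<lambda>k. ennreal ((cmod (f (s k) x - f m x))\<^sup>2)) \<partial>M)"
    proof (rule nn_integral_cong_AE)
      show "AE x in M. ennreal ((cmod (h x - f m x))\<^sup>2) = liminf (\<lambda>k. ennreal ((cmod (f (s k) x - f m x))\<^sup>2))"
        using AEconv
      proof (rule eventually_mono)
        fix x assume "(\<lambda>k. f (s k) x) \<longlonglongrightarrow> lim (\<lambda>k. f (s k) x)"
        then have "(\<lambda>k. f (s k) x) \<longlonglongrightarrow> h x" unfolding h_def .
        then have "(\<lambda>k. ennreal ((cmod (f (s k) x - f m x))\<^sup>2)) \<longlonglongrightarrow> ennreal ((cmod (h x - f m x))\<^sup>2)"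
          by (intro tendsto_ennrealI tendsto_intros)
        then show "ennreal ((cmod (h x - f m x))\<^sup>2) = liminf (\<lambda>k. ennreal ((cmod (f (s k) x - f m x))\<^sup>2))"
          using lim_imp_Liminf[OF trivial_limit_sequentially] by metis
      qed
    qed
    also have "\<dots> \<le> liminf (\<lambda>k. \<integral>\<^sup>+x. ennreal ((cmod (f (s k) x - f m x))\<^sup>2) \<partial>M)"
      by (rule nn_integral_liminf) measurable
    also have "\<dots> \<le> ennreal (e m)"
    proof (rule Liminf_le)
      show "eventually (\<lambda>k. (\<integral>\<^sup>+x. ennreal ((cmod (f (s k) x - f m x))\<^sup>2) \<partial>M) \<le> ennreal (e m)) sequentially"
        unfolding eventually_sequentially
      proof (intro exI allI impI)
        fix k assume k: "k \<ge> m"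
        have int: "integrable M (\<lambda>x. (cmod (f (s k) x - f m x))\<^sup>2)"
          using L2_diff[OF f f] unfolding L2_def by auto
        have "(\<integral>\<^sup>+x. ennreal ((cmod (f (s k) x - f m x))\<^sup>2) \<partial>M) = ennreal (\<integral>x. (cmod (f (s k) x - f m x))\<^sup>2 \<partial>M)"
          by (rule nn_integral_eq_integral[OF int]) auto
        also have "\<dots> \<le> ennreal (e m)" using cau[of m "s k"] k s_ge[of k] by (intro ennreal_leI) simp
        finally show "(\<integral>\<^sup>+x. ennreal ((cmod (f (s k) x - f m x))\<^sup>2) \<partial>M) \<le> ennreal (e m)" .
      qed
    qed simp
    finally show ?thesis .
  qed
  have hint: "integrable M (\<lambda>x. (cmod (h x - f m x))\<^sup>2) \<and> (\<integral>x. (cmod (h x - f m x))\<^sup>2 \<partial>M) \<le> e m" for m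
  proof
    show int: "integrable M (\<lambda>x. (cmod (h x - f m x))\<^sup>2)"
    proof (rule integrableI_bounded)
      show "(\<lambda>x. (cmod (h x - f m x))\<^sup>2) \<in> borel_measurable M" by measurable
      have "(\<integral>\<^sup>+x. ennreal (norm ((cmod (h x - f m x))\<^sup>2)) \<partial>M) = (\<integral>\<^sup>+x. ennreal ((cmod (h x - f m x))\<^sup>2) \<partial>M)"
        by simp
      also have "\<dots> \<le> ennreal (e m)" by (rule bound)
      also have "\<dots> < \<infinity>" by simp
      finally show "(\<integral>\<^sup>+x. ennreal (norm ((cmod (h x - f m x))\<^sup>2)) \<partial>M) < \<infinity>" .
    qed
    have "ennreal (\<integral>x. (cmod (h x - f m x))\<^sup>2 \<partial>M) = (\<integral>\<^sup>+x. ennreal ((cmod (h x - f m x))\<^sup>2) \<partial>M)"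
      by (rule nn_integral_eq_integral[OF int, symmetric]) auto
    also have "\<dots> \<le> ennreal (e m)" by (rule bound)
    finally show "(\<integral>x. (cmod (h x - f m x))\<^sup>2 \<partial>M) \<le> e m" using e0[of m] by simp
  qed
  have "L2 M (\<lambda>x. h x - f 0 x)" unfolding L2_def using hint[of 0] by auto
  then have "L2 M (\<lambda>x. (h x - f 0 x) + f 0 x)" by (rule L2_add[OF _ f])
  then have "L2 M h" by simp
  then show ?thesis using hint by blast
qed



context hset begin

lemma fourier_close:
  assumes psi: "L2 M \<psi>" and P: "L2 M P" and x: "\<xi> \<in> Ghat" and ab: "a < d \<xi>" "b < d \<xi>"
    and t: "t > 0" and cl: "(\<integral>g. (cmod (\<psi> g - P g))\<^sup>2 \<partial>M) \<le> t\<^sup>2"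
  shows "cmod (fourier M d \<rho> \<psi> \<xi> $$ (a,b) - fourier M d \<rho> P \<xi> $$ (a,b)) \<le> t"
proof -
  have u: "L2 M (\<lambda>g. \<psi> g - P g)" by (rule L2_diff[OF psi P])
  have r: "L2 M (\<lambda>g. \<rho> \<xi> g $$ (b,a))" by (rule rho_L2[OF x ab(2,1)])
  have i1: "integrable M (\<lambda>g. \<psi> g * cnj (\<rho> \<xi> g $$ (b,a)))" by (rule L2_integrable_prod[OF psi r])
  have i2: "integrable M (\<lambda>g. P g * cnj (\<rho> \<xi> g $$ (b,a)))" by (rule L2_integrable_prod[OF P r])
  have i3: "integrable M (\<lambda>g. (\<psi> g - P g) * cnj (\<rho> \<xi> g $$ (b,a)))" by (rule L2_integrable_prod[OF u r])
  have "fourier M d \<rho> \<psi> \<xi> $$ (a,b) - fourier M d \<rho> P \<xi> $$ (a,b) =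
      (\<integral>g. \<psi> g * cnj (\<rho> \<xi> g $$ (b,a)) \<partial>M) - (\<integral>g. P g * cnj (\<rho> \<xi> g $$ (b,a)) \<partial>M)"
    using fourier_entry[OF x ab] by simp
  also have "\<dots> = (\<integral>g. (\<psi> g - P g) * cnj (\<rho> \<xi> g $$ (b,a)) \<partial>M)"
    using i1 i2 by (simp add: left_diff_distrib)
  finally have eq: "fourier M d \<rho> \<psi> \<xi> $$ (a,b) - fourier M d \<rho> P \<xi> $$ (a,b) =
      (\<integral>g. (\<psi> g - P g) * cnj (\<rho> \<xi> g $$ (b,a)) \<partial>M)" .
  have "cmod (\<integral>g. (\<psi> g - P g) * cnj (\<rho> \<xi> g $$ (b,a)) \<partial>M) \<le>
      (\<integral>g. cmod ((\<psi> g - P g) * cnj (\<rho> \<xi> g $$ (b,a))) \<partial>M)"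
    by (rule Bochner_Integration.integral_norm_bound)
  also have "\<dots> \<le> (\<integral>g. cmod (\<psi> g - P g) \<partial>M)"
  proof (rule integral_mono)
    show "integrable M (\<lambda>g. cmod ((\<psi> g - P g) * cnj (\<rho> \<xi> g $$ (b,a))))" using i3 by auto
    show "integrable M (\<lambda>g. cmod (\<psi> g - P g))" using L1_le_L2(1)[OF prob u t cl] .
    fix g assume "g \<in> space M"
    then have g: "g \<in> carrier G" using space_M by auto
    have "cmod (\<psi> g - P g) * cmod (\<rho> \<xi> g $$ (b,a)) \<le> cmod (\<psi> g - P g) * 1"
      using rho_bound[OF x g ab(2,1)] by (intro mult_left_mono) auto
    then show "cmod ((\<psi> g - P g) * cnj (\<rho> \<xi> g $$ (b,a))) \<le> cmod (\<psi> g - P g)"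
      by (simp add: norm_mult)
  qed
  also have "\<dots> \<le> t" using L1_le_L2(2)[OF prob u t cl] .
  finally show ?thesis using eq by simp
qed

lemma fourier_zero: "\<xi> \<in> Ghat \<Longrightarrow> fourier M d \<rho> (\<lambda>g. 0) \<xi> = 0\<^sub>m (d \<xi>) (d \<xi>)"
  unfolding fourier_def by (intro eq_matI) auto

lemma frob2_zero_iff: "A \<in> carrier_mat n n \<Longrightarrow> frob2 A = 0 \<longleftrightarrow> A = 0\<^sub>m n n"
proof
  assume A: "A \<in> carrier_mat n n" and f: "frob2 A = 0"
  have "\<forall>a\<in>{..<n}. (\<Sum>b<n. (cmod (A $$ (a,b)))\<^sup>2) = 0"
    using f A unfolding frob2_carrier[OF A] by (subst sum_nonneg_eq_0_iff[symmetric]) (auto intro: sum_nonneg)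
  then have "\<forall>a<n. \<forall>b<n. (cmod (A $$ (a,b)))\<^sup>2 = 0" by (simp add: sum_nonneg_eq_0_iff)
  then show "A = 0\<^sub>m n n" using A by (intro eq_matI) auto
next
  assume "A \<in> carrier_mat n n" "A = 0\<^sub>m n n"
  then show "frob2 A = 0" by (simp add: frob2_def)
qed

lemma proj_exists:
  assumes phi: "L2 M \<phi>" and H: "H \<subseteq> Ghat"
  shows "\<exists>\<psi>. L2 M \<psi> \<and> (\<forall>\<xi>\<in>Ghat. fourier M d \<rho> \<psi> \<xi> =
            (if \<xi> \<in> H then fourier M d \<rho> \<phi> \<xi> else 0\<^sub>m (d \<xi>) (d \<xi>)))"
proof -
  define C where "C = fourier M d \<rho> \<phi>"
  have Cc: "\<And>\<xi>. C \<xi> \<in> carrier_mat (d \<xi>) (d \<xi>)" unfolding C_def by (rule fourier_car)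
  define w where "w \<xi> = real (d \<xi>) * frob2 (C \<xi>)" for \<xi>
  have wnn: "w \<xi> \<ge> 0" for \<xi> unfolding w_def using frob2_nonneg by auto
  define S where "S = {\<xi>\<in>H. C \<xi> \<noteq> 0\<^sub>m (d \<xi>) (d \<xi>)}"
  have SH: "S \<subseteq> H" unfolding S_def by auto
  have wz: "w \<xi> = 0 \<longleftrightarrow> C \<xi> = 0\<^sub>m (d \<xi>) (d \<xi>)" if "\<xi> \<in> H" for \<xi>
  proof -
    have "real (d \<xi>) \<noteq> 0" using d_pos[of \<xi>] that H by auto
    then have "w \<xi> = 0 \<longleftrightarrow> frob2 (C \<xi>) = 0" unfolding w_def by simp
    then show ?thesis using frob2_zero_iff[OF Cc] by simp
  qed
  have Sw: "S = {\<xi>\<in>H. w \<xi> \<noteq> 0}"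
    unfolding S_def using wz by blast
  have bes: "sum w F \<le> (\<integral>g. (cmod (\<phi> g))\<^sup>2 \<partial>M)" if "finite F" "F \<subseteq> Ghat" for F
    using bessel[OF phi that] unfolding w_def C_def .
  have "(\<lambda>x. norm (w x)) summable_on H"
  proof -
    have "(\<lambda>x. norm (w x)) = w" using wnn by auto
    moreover have "w summable_on H"
    proof (rule nonneg_bdd_above_summable_on)
      show "\<And>x. x \<in> H \<Longrightarrow> 0 \<le> w x" using wnn by auto
      show "bdd_above (sum w ` {F. F \<subseteq> H \<and> finite F})"
        using bes H by (intro bdd_aboveI[where M="\<integral>g. (cmod (\<phi> g))\<^sup>2 \<partial>M"]) auto
    qed
    ultimately show ?thesis by simp
  qed
  then have Scount: "countable S" unfolding Sw by (rule abs_summable_countable)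
  show ?thesis
  proof (cases "S = {}")
    case True
    show ?thesis
    proof (intro exI[of _ "\<lambda>g. 0"] conjI ballI)
      show "L2 M (\<lambda>g. 0)" by (rule L2_zero)
      fix \<xi> assume x: "\<xi> \<in> Ghat"
      show "fourier M d \<rho> (\<lambda>g. 0) \<xi> = (if \<xi> \<in> H then fourier M d \<rho> \<phi> \<xi> else 0\<^sub>m (d \<xi>) (d \<xi>))"
        using True fourier_zero[OF x] unfolding S_def C_def by auto
    qed
  next
    case False
    define F where "F N = from_nat_into S ` {..<N}" for N
    have Ffin: "finite (F N)" for N unfolding F_def by auto
    have FS: "F N \<subseteq> S" for N unfolding F_def using from_nat_into[OF False] by auto
    have FG: "F N \<subseteq> Ghat" for N using FS SH H by blast
    have Fmono: "m \<le> N \<Longrightarrow> F m \<subseteq> F N" for m N unfolding F_def by auto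
    have Fall: "\<exists>m. \<xi> \<in> F m" if "\<xi> \<in> S" for \<xi>
    proof -
      have "\<xi> \<in> range (from_nat_into S)" using range_from_nat_into[OF False Scount] that by simp
      then obtain n where "\<xi> = from_nat_into S n" by auto
      then show ?thesis unfolding F_def by (intro exI[of _ "Suc n"]) auto
    qed
    define P where "P N = recon (F N) C" for N
    have PL2: "L2 M (P N)" for N unfolding P_def by (rule recon_L2[OF Ffin FG])
    define a where "a N = sum w (F N)" for N
    have a_inc: "incseq a" unfolding incseq_def a_def
      using Fmono Ffin wnn by (auto intro!: sum_mono2)
    have a_bd: "\<forall>i. a i \<le> (\<integral>g. (cmod (\<phi> g))\<^sup>2 \<partial>M)" unfolding a_def using bes Ffin FG by auto
    obtain L where aL: "a \<longlonglongrightarrow> L" and aleL: "\<forall>i. a i \<le> L" using incseq_convergent[OF a_inc a_bd] by blast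
    define e where "e m = L - a m" for m
    have e0: "e \<longlonglongrightarrow> 0" unfolding e_def using tendsto_diff[OF tendsto_const[of L] aL] by simp
    have cau: "(\<integral>g. (cmod (P N g - P m g))\<^sup>2 \<partial>M) \<le> e m" if mN: "m \<le> N" for m N
    proof -
      have "P N g - P m g = recon (F N - F m) C g" for g
        unfolding P_def recon_def using Fmono[OF mN] Ffin by (simp add: sum_diff)
      then have "(\<integral>g. (cmod (P N g - P m g))\<^sup>2 \<partial>M) = (\<integral>g. (cmod (recon (F N - F m) C g))\<^sup>2 \<partial>M)" by simp
      also have "\<dots> = sum w (F N - F m)" unfolding w_def
        by (rule recon_norm_real) (use Ffin FG Cc in auto)
      also have "\<dots> = a N - a m" unfolding a_def using Fmono[OF mN] Ffin by (simp add: sum_diff)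
      also have "\<dots> \<le> e m" unfolding e_def using aleL[rule_format, of N] by linarith
      finally show ?thesis .
    qed
    obtain \<psi> where psi: "L2 M \<psi>" and close: "\<And>m. (\<integral>g. (cmod (\<psi> g - P m g))\<^sup>2 \<partial>M) \<le> e m"
      using L2_complete[OF prob PL2 e0 cau] by blast
    have e_nn: "e m \<ge> 0" for m unfolding e_def using aleL by auto
    have lim_entry: "fourier M d \<rho> \<psi> \<xi> $$ (a',b') = v"
      if x: "\<xi> \<in> Ghat" and ab: "a' < d \<xi>" "b' < d \<xi>"
        and ev: "\<And>m. m \<ge> m0 \<Longrightarrow> fourier M d \<rho> (P m) \<xi> $$ (a',b') = v" for \<xi> a' b' v m0
    proof -
      have "cmod (fourier M d \<rho> \<psi> \<xi> $$ (a',b') - v) \<le> \<epsilon>" if \<epsilon>: "\<epsilon> > 0" for \<epsilon>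
      proof -
        have "eventually (\<lambda>m. e m < \<epsilon>\<^sup>2) sequentially"
          using order_tendstoD(2)[OF e0, of "\<epsilon>\<^sup>2"] \<epsilon> by simp
        then obtain m1 where m1: "\<And>m. m \<ge> m1 \<Longrightarrow> e m < \<epsilon>\<^sup>2" unfolding eventually_sequentially by blast
        define m where "m = max m0 m1"
        have "m \<ge> m1" "m \<ge> m0" unfolding m_def by auto
        then have "e m < \<epsilon>\<^sup>2" using m1 by blast
        then have "(\<integral>g. (cmod (\<psi> g - P m g))\<^sup>2 \<partial>M) \<le> \<epsilon>\<^sup>2" using close[of m] by linarith
        then have "cmod (fourier M d \<rho> \<psi> \<xi> $$ (a',b') - fourier M d \<rho> (P m) \<xi> $$ (a',b')) \<le> \<epsilon>"
          by (rule fourier_close[OF psi PL2 x ab \<epsilon>])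
        then show ?thesis using ev[OF \<open>m \<ge> m0\<close>] by simp
      qed
      then have "cmod (fourier M d \<rho> \<psi> \<xi> $$ (a',b') - v) = 0"
        by (metis dense_ge norm_ge_zero order.antisym)
      then show ?thesis by simp
    qed
    show ?thesis
    proof (intro exI[of _ \<psi>] conjI ballI psi)
      fix \<xi> assume x: "\<xi> \<in> Ghat"
      show "fourier M d \<rho> \<psi> \<xi> = (if \<xi> \<in> H then fourier M d \<rho> \<phi> \<xi> else 0\<^sub>m (d \<xi>) (d \<xi>))"
      proof (rule eq_matI)
        fix a' b' assume "a' < dim_row (if \<xi> \<in> H then fourier M d \<rho> \<phi> \<xi> else 0\<^sub>m (d \<xi>) (d \<xi>))"
          "b' < dim_col (if \<xi> \<in> H then fourier M d \<rho> \<phi> \<xi> else 0\<^sub>m (d \<xi>) (d \<xi>))"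
        then have ab: "a' < d \<xi>" "b' < d \<xi>" using fourier_car[of \<phi> \<xi>] by (auto split: if_splits)
        have Pf: "fourier M d \<rho> (P m) \<xi> $$ (a',b') = (if \<xi> \<in> F m then C \<xi> $$ (a',b') else 0)" for m
          unfolding P_def by (rule recon_fourier[OF Ffin FG x ab])
        show "fourier M d \<rho> \<psi> \<xi> $$ (a', b') = (if \<xi> \<in> H then fourier M d \<rho> \<phi> \<xi> else 0\<^sub>m (d \<xi>) (d \<xi>)) $$ (a', b')"
        proof (cases "\<xi> \<in> S")
          case True
          then obtain m0 where m0: "\<xi> \<in> F m0" using Fall by blast
          have "fourier M d \<rho> \<psi> \<xi> $$ (a',b') = C \<xi> $$ (a',b')"
            by (rule lim_entry[OF x ab, of m0]) (use Pf Fmono m0 in auto)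
          then show ?thesis using True SH ab unfolding C_def by auto
        next
          case False
          have nF: "\<xi> \<notin> F m" for m using FS False by blast
          have "fourier M d \<rho> \<psi> \<xi> $$ (a',b') = 0"
            by (rule lim_entry[OF x ab, of 0]) (use Pf nF in auto)
          moreover have "\<xi> \<in> H \<Longrightarrow> C \<xi> = 0\<^sub>m (d \<xi>) (d \<xi>)" using False unfolding S_def by auto
          ultimately show ?thesis using ab unfolding C_def by auto
        qed
      qed (use fourier_car[of \<psi> \<xi>] fourier_car[of \<phi> \<xi>] in auto)
    qed
  qed
qed

end


lemma nn_count_mono:
  assumes "H \<subseteq> Gh" and "\<And>x. x \<in> H \<Longrightarrow> f x \<le> g x"
  shows "(\<integral>\<^sup>+x. f x \<partial>count_space H) \<le> (\<integral>\<^sup>+x. g x \<partial>count_space Gh)"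
proof -
  have "(\<integral>\<^sup>+x. f x \<partial>count_space H) = (\<integral>\<^sup>+x. f x * indicator H x \<partial>count_space UNIV)"
    by (rule nn_integral_count_space_indicator) (simp add: NO_MATCH_def)
  also have "\<dots> \<le> (\<integral>\<^sup>+x. g x * indicator Gh x \<partial>count_space UNIV)"
    using assms by (intro nn_integral_mono) (auto split: split_indicator)
  also have "\<dots> = (\<integral>\<^sup>+x. g x \<partial>count_space Gh)"
    by (rule nn_integral_count_space_indicator[symmetric]) (simp add: NO_MATCH_def)
  finally show ?thesis .
qed

lemma plus_norm_mono:
  assumes "H \<subseteq> Gh"
  shows "plus_norm G Gh d \<rho> H t \<le> plus_norm G Gh d \<rho> Gh t"
  unfolding plus_norm_def using assms by (intro INF_superset_mono) auto

lemma objective_mono: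
  assumes H: "H \<subseteq> Ghat"
    and eqf: "\<And>j \<xi>. j < q \<Longrightarrow> \<xi> \<in> H \<Longrightarrow> fourier M d \<rho> (\<psi> j) \<xi> = fourier M d \<rho> (\<phi> j) \<xi>"
  shows "objective G M Ghat d \<rho> H n q y lam mu \<psi> l \<le> objective G M Ghat d \<rho> Ghat n q y lam mu \<phi> l"
  unfolding objective_def
proof (intro add_mono sum_mono mult_left_mono)
  fix i assume "i \<in> {..<n}"
  have res: "residual M d \<rho> q (y i) \<psi> (l i) \<xi> = residual M d \<rho> q (y i) \<phi> (l i) \<xi>" if "\<xi> \<in> H" for \<xi>
    unfolding residual_def using eqf that by (intro eq_matI) auto
  show "(\<integral>\<^sup>+\<xi>. ennreal ((real (d \<xi>))\<^sup>2 / 2 * frob2 (residual M d \<rho> q (y i) \<psi> (l i) \<xi>)) \<partial>count_space H)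
      \<le> (\<integral>\<^sup>+\<xi>. ennreal ((real (d \<xi>))\<^sup>2 / 2 * frob2 (residual M d \<rho> q (y i) \<phi> (l i) \<xi>)) \<partial>count_space Ghat)"
    by (rule nn_count_mono[OF H]) (simp add: res)
  fix j assume "j \<in> {..<q}"
  show "plus_norm G Ghat d \<rho> H (l i j) \<le> plus_norm G Ghat d \<rho> Ghat (l i j)"
    by (rule plus_norm_mono[OF H])
next
  fix j assume j: "j \<in> {..<q}"
  show "(\<integral>\<^sup>+\<xi>. ennreal ((real (d \<xi>))\<^sup>2 * frob2 (fourier M d \<rho> (\<psi> j) \<xi>)) \<partial>count_space H)
      \<le> (\<integral>\<^sup>+\<xi>. ennreal ((real (d \<xi>))\<^sup>2 * frob2 (fourier M d \<rho> (\<phi> j) \<xi>)) \<partial>count_space Ghat)"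
    by (rule nn_count_mono[OF H]) (use eqf j in simp)
qed auto

theorem proposition5:
  fixes G :: "'g monoid" and T :: "'g topology" and M :: "'g measure"
    and Ghat H :: "'x set" and d :: "'x \<Rightarrow> nat" and \<rho> :: "'x \<Rightarrow> 'g \<Rightarrow> complex mat"
    and n q :: nat and y :: "nat \<Rightarrow> 'g \<Rightarrow> real" and lam :: real and mu :: "nat \<Rightarrow> real"
  assumes "compact_Hausdorff_group G T"
    and "normalized_Haar G T M"
    and "complete_dual G T Ghat d \<rho>"
    and "\<forall>i<n. L2 M (\<lambda>g. complex_of_real (y i g))"
    and "q \<ge> 1"
    and "lam \<ge> 0"
    and "\<forall>j<q. mu j \<ge> 0"
    and "H \<subseteq> Ghat"
  shows "OPT G M Ghat d \<rho> H n q y lam mu \<le> OPT G M Ghat d \<rho> Ghat n q y lam mu"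
proof -
  have grp: "group G" and top: "topspace T = carrier G"
    using assms(1) unfolding compact_Hausdorff_group_def by auto
  interpret hset G T M Ghat d \<rho>
    by (intro hset.intro hset_axioms.intro grp assms(2) assms(3) top)
  have H: "H \<subseteq> Ghat" by (rule assms(8))
  show ?thesis
    unfolding OPT_def
  proof (rule INF_mono)
    fix p assume "p \<in> {(\<phi>, l). (\<forall>j<q. L2_hat M Ghat d \<rho> Ghat (\<phi> j)) \<and> (\<forall>i<n. \<forall>j<q. block_op d Ghat (l i j))}"
    then obtain \<phi> l where p: "p = (\<phi>, l)" and phi: "\<forall>j<q. L2_hat M Ghat d \<rho> Ghat (\<phi> j)"
      and lb: "\<forall>i<n. \<forall>j<q. block_op d Ghat (l i j)" by auto
    have "\<exists>\<psi>. \<forall>j. j < q \<longrightarrow> L2 M (\<psi> j) \<and> (\<forall>\<xi>\<in>Ghat. fourier M d \<rho> (\<psi> j) \<xi> =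
            (if \<xi> \<in> H then fourier M d \<rho> (\<phi> j) \<xi> else 0\<^sub>m (d \<xi>) (d \<xi>)))"
    proof (rule choice, intro allI)
      fix j
      show "\<exists>\<psi>'. j < q \<longrightarrow> L2 M \<psi>' \<and> (\<forall>\<xi>\<in>Ghat. fourier M d \<rho> \<psi>' \<xi> =
            (if \<xi> \<in> H then fourier M d \<rho> (\<phi> j) \<xi> else 0\<^sub>m (d \<xi>) (d \<xi>)))"
      proof (cases "j < q")
        case True
        then have "L2 M (\<phi> j)" using phi unfolding L2_hat_def by auto
        then show ?thesis using proj_exists[OF _ H] by blast
      qed simp
    qed
    then obtain \<psi> where psi0: "\<forall>j. j < q \<longrightarrow> L2 M (\<psi> j) \<and> (\<forall>\<xi>\<in>Ghat. fourier M d \<rho> (\<psi> j) \<xi> =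
            (if \<xi> \<in> H then fourier M d \<rho> (\<phi> j) \<xi> else 0\<^sub>m (d \<xi>) (d \<xi>)))" by blast
    have psi: "\<And>j. j < q \<Longrightarrow> L2 M (\<psi> j) \<and> (\<forall>\<xi>\<in>Ghat. fourier M d \<rho> (\<psi> j) \<xi> =
            (if \<xi> \<in> H then fourier M d \<rho> (\<phi> j) \<xi> else 0\<^sub>m (d \<xi>) (d \<xi>)))" using psi0 by blast
    have feas: "(\<psi>, l) \<in> {(\<phi>, l). (\<forall>j<q. L2_hat M Ghat d \<rho> H (\<phi> j)) \<and> (\<forall>i<n. \<forall>j<q. block_op d H (l i j))}"
    proof -
      have "\<forall>j<q. L2_hat M Ghat d \<rho> H (\<psi> j)" unfolding L2_hat_def using psi by auto
      moreover have "\<forall>i<n. \<forall>j<q. block_op d H (l i j)" using lb H unfolding block_op_def by blast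
      ultimately show ?thesis by simp
    qed
    have "objective G M Ghat d \<rho> H n q y lam mu \<psi> l \<le> objective G M Ghat d \<rho> Ghat n q y lam mu \<phi> l"
    proof (rule objective_mono[OF H])
      fix j \<xi> assume j: "j < q" and x: "\<xi> \<in> H"
      then have "\<xi> \<in> Ghat" using H by auto
      then show "fourier M d \<rho> (\<psi> j) \<xi> = fourier M d \<rho> (\<phi> j) \<xi>" using psi[OF j] x by simp
    qed
    then show "\<exists>p'\<in>{(\<phi>, l). (\<forall>j<q. L2_hat M Ghat d \<rho> H (\<phi> j)) \<and> (\<forall>i<n. \<forall>j<q. block_op d H (l i j))}.
        (case p' of (\<phi>, l) \<Rightarrow> objective G M Ghat d \<rho> H n q y lam mu \<phi> l) \<le>
        (case p of (\<phi>, l) \<Rightarrow> objective G M Ghat d \<rho> Ghat n q y lam mu \<phi> l)"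
      using \<open>objective G M Ghat d \<rho> H n q y lam mu \<psi> l \<le> objective G M Ghat d \<rho> Ghat n q y lam mu \<phi> l\<close>
      by (intro bexI[OF _ feas]) (simp add: p)
  qed
qed


end
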